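(* Let $q,r,\mu,\nu$ be positive integers with $\nu\ge q+r$. Let $\bar{\mathcal{K}}_*^{\mu-1}(z)$ be the matrix $\bar{\mathcal{K}}^{\mu-1}(z)$ defined below for the parameter value $\nu_*=q+r-1$ in place of $\nu$, and put \[ \bar{\bar{\mathcal{K}}}^{\mu-1}(z)=\begin{pmatrix}\bar{\mathcal{K}}_*^{\mu-1}(z)&0\\0&I_{r(\nu-q-r+1)}\end{pmatrix}. \] Then the kernel of $\mathcal{N}(z)$ is spanned by the columns of $\bar{\bar{\mathcal{K}}}^{\mu-1}(z)$ and has dimension $\nu r-\mu q$ if $\mu<r$ and $(\nu-q)r$ if $\mu\ge r$; that is, $\dim\ker\mathcal{N}(z)=\nu r-q\min\{\mu,r\}$.
   Context: Matrix indices start at $0$; $'$ and $^{(j)}$ denote $z$-derivatives. $u(z)=(1,\dots,z^{q-1})^\top$, $w(z)=(1,\dots,z^{r-1})$, $M(z)=u(z)w(z)$; $\mathcal{N}(z)\in\mathbb{C}^{\mu q\times\nu r}$ is the block matrix with $(i,j)$ block $\frac{1}{i!j!}M^{(i+j)}(z)$. Construction of $\bar{\mathcal{K}}^{\mu-1}$ for a parameter $\nu'$ with $q+1\le\nu'\le q+r-1$ (here $\nu'=\nu_*=q+r-1$, requiring $r\ge2$): $S_n$ is the $n\times n$ shift matrix $(S_n)_{ij}=\delta_{i+1,j}$; $\ell_q$ is the last standard basis vector of $\mathbb{R}^q$, $\varphi$ the first standard basis vector of $\mathbb{R}^{\nu'-q}$; $G(z)\in\mathbb{C}^{r\times r}$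 has entries $G_{ij}=z^{j-i-1}$ for $j>i$, $0$ otherwise; $G_{j0}(z)$ is the matrix of the first $r-j$ rows of $G(z)$; $F_j(z)\in\mathbb{C}^{(r-j)\times(r-j-1)}$ ($0\le j\le r-2$) has $(F_j)_{ii}=-z$, $(F_j)_{i+1,i}=1$, zero otherwise. For $0\le j\le r-2$, $\bar K_j=\begin{pmatrix} I_q\otimes F_j+S_q\otimes F_j' & -(\ell_q\varphi^\top)\otimes \frac{1}{j!}G_{j0}^{(j)}\\ 0 & I_{\nu'-q}\otimes I_r-S_{\nu'-q}\otimes G\end{pmatrix}$; $\bar K_{r-1}=\begin{pmatrix}0_{q\times(\nu'-q)r}\\ I_{\nu'-q}\otimes I_r-S_{\nu'-q}\otimes G\end{pmatrix}$; $\bar K_j=I_{\nu'-q}\otimes I_r-S_{\nu'-q}\otimes G$ for $j\ge r$; and $\bar{\mathcal{K}}^{\mu-1}=\bar K_0\bar K_1\cdots\bar K_{\mu-1}$. *)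

theory Defs
  imports "Jordan_Normal_Form.Matrix_Kernel" "HOL-Computational_Algebra.Polynomial"
begin

(* Matrices are Jordan_Normal_Form matrices over complex numbers; all indices start at 0.
   Matrix-valued polynomial functions of z are represented as matrices of polynomials;
   the k-th z-derivative evaluated at z is taken entrywise. *)

definition mderiv :: "nat \<Rightarrow> complex poly mat \<Rightarrow> complex \<Rightarrow> complex mat" where
  "mderiv k P z = map_mat (\<lambda>p. poly ((pderiv ^^ k) p) z) P"

definition upoly :: "nat \<Rightarrow> complex poly mat" where
  "upoly q = mat q 1 (\<lambda>(a,_). [:0,1:] ^ a)"

definition wpoly :: "nat \<Rightarrow> complex poly mat" where
  "wpoly r = mat 1 r (\<lambda>(_,b). [:0,1:] ^ b)"

definition Mpoly :: "nat \<Rightarrow> nat \<Rightarrow> complex poly mat" where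
  "Mpoly q r = upoly q * wpoly r"

(* N(z): (mu q) x (nu r) block matrix, block (i,j) = M^(i+j)(z) / (i! j!) *)
definition Nmat :: "nat \<Rightarrow> nat \<Rightarrow> nat \<Rightarrow> nat \<Rightarrow> complex \<Rightarrow> complex mat" where
  "Nmat q r mu nu z = mat (mu * q) (nu * r)
     (\<lambda>(i,j). mderiv (i div q + j div r) (Mpoly q r) z $$ (i mod q, j mod r)
              / (fact (i div q) * fact (j div r)))"

definition kron :: "'a :: times mat \<Rightarrow> 'a mat \<Rightarrow> 'a mat" where
  "kron A B = mat (dim_row A * dim_row B) (dim_col A * dim_col B)
     (\<lambda>(i,j). A $$ (i div dim_row B, j div dim_col B) * B $$ (i mod dim_row B, j mod dim_col B))"

definition shift_mat :: "nat \<Rightarrow> complex mat" where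
  "shift_mat n = mat n n (\<lambda>(i,j). if i + 1 = j then 1 else 0)"

definition Gpoly :: "nat \<Rightarrow> complex poly mat" where
  "Gpoly r = mat r r (\<lambda>(i,j). if i < j then [:0,1:] ^ (j - i - 1) else 0)"

definition Gj0_deriv :: "nat \<Rightarrow> nat \<Rightarrow> complex \<Rightarrow> complex mat" where
  "Gj0_deriv r j z = mat (r - j) r (\<lambda>(a,b). mderiv j (Gpoly r) z $$ (a,b))"

definition Fpoly :: "nat \<Rightarrow> nat \<Rightarrow> complex poly mat" where
  "Fpoly r j = mat (r - j) (r - j - 1)
     (\<lambda>(a,b). if a = b then [:0,-1:] else if a = b + 1 then 1 else 0)"

definition Dblock :: "nat \<Rightarrow> nat \<Rightarrow> nat \<Rightarrow> complex \<Rightarrow> complex mat" where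
  "Dblock q r nu' z = kron (1\<^sub>m (nu' - q)) (1\<^sub>m r) - kron (shift_mat (nu' - q)) (mderiv 0 (Gpoly r) z)"

definition ellphi :: "nat \<Rightarrow> nat \<Rightarrow> complex mat" where
  "ellphi q nu' = mat_of_cols q [unit_vec q (q - 1)] * mat_of_rows (nu' - q) [unit_vec (nu' - q) 0]"

definition Kbar :: "nat \<Rightarrow> nat \<Rightarrow> nat \<Rightarrow> complex \<Rightarrow> nat \<Rightarrow> complex mat" where
  "Kbar q r nu' z j =
    (if j + 2 \<le> r then
       four_block_mat
         (kron (1\<^sub>m q) (mderiv 0 (Fpoly r j) z) + kron (shift_mat q) (mderiv 1 (Fpoly r j) z))
         (- kron (ellphi q nu') ((1 / fact j) \<cdot>\<^sub>m Gj0_deriv r j z))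
         (0\<^sub>m ((nu' - q) * r) (q * (r - j - 1)))
         (Dblock q r nu' z)
     else if j + 1 = r then
       four_block_mat
         (0\<^sub>m q 0) (0\<^sub>m q ((nu' - q) * r))
         (0\<^sub>m ((nu' - q) * r) 0) (Dblock q r nu' z)
     else Dblock q r nu' z)"

(* Kprod q r nu' z m = Kbar_0 * Kbar_1 * ... * Kbar_m, i.e. \bar{\mathcal K}^m *)
fun Kprod :: "nat \<Rightarrow> nat \<Rightarrow> nat \<Rightarrow> complex \<Rightarrow> nat \<Rightarrow> complex mat" where
  "Kprod q r nu' z 0 = Kbar q r nu' z 0"
| "Kprod q r nu' z (Suc m) = Kprod q r nu' z m * Kbar q r nu' z (Suc m)"

definition Kbarbar :: "nat \<Rightarrow> nat \<Rightarrow> nat \<Rightarrow> nat \<Rightarrow> complex \<Rightarrow> complex mat" where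
  "Kbarbar q r mu nu z =
    (let K = Kprod q r (q + r - 1) z (mu - 1); s = r * (nu - q - r + 1) in
     four_block_mat K (0\<^sub>m (dim_row K) s) (0\<^sub>m s (dim_col K)) (1\<^sub>m s))"

end

theory Submission
  imports Defs "Jordan_Normal_Form.DL_Rank"
begin

lemma pderiv_xz_mult: "pderiv ([:-z,1:] * f) = [:-z,1:] * pderiv f + f"
  by (subst pderiv_mult) (simp add: pderiv_pCons)

lemma hpderiv_xz_Suc:
  "(pderiv ^^ Suc k) ([:-z,1:] * f) = [:-z,1:] * (pderiv ^^ Suc k) f + Polynomial.smult (of_nat (Suc k)) ((pderiv ^^ k) f)"
proof (induction k)
  case 0
  then show ?case using pderiv_xz_mult[of z f] by simp
next
  case (Suc k)
  have "(pderiv ^^ Suc (Suc k)) ([:-z,1:] * f) = pderiv ((pderiv ^^ Suc k) ([:-z,1:] * f))" by simp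
  also have "\<dots> = pderiv ([:-z,1:] * (pderiv ^^ Suc k) f + Polynomial.smult (of_nat (Suc k)) ((pderiv ^^ k) f))"
    using Suc.IH by (rule arg_cong)
  also have "\<dots> = pderiv ([:-z,1:] * (pderiv ^^ Suc k) f) + Polynomial.smult (of_nat (Suc k)) (pderiv ((pderiv ^^ k) f))"
    by (simp only: pderiv_add pderiv_smult)
  also have "\<dots> = [:-z,1:] * (pderiv ^^ Suc (Suc k)) f + (pderiv ^^ Suc k) f + Polynomial.smult (of_nat (Suc k)) ((pderiv ^^ Suc k) f)"
    using pderiv_xz_mult[of z "(pderiv ^^ Suc k) f"] by simp
  also have "\<dots> = [:-z,1:] * (pderiv ^^ Suc (Suc k)) f + Polynomial.smult (of_nat (Suc (Suc k))) ((pderiv ^^ Suc k) f)"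
    by (simp add: algebra_simps smult_add_left)
  finally show ?case .
qed

lemma higher_pderiv_diff: "(pderiv ^^ n) (p - q) = (pderiv ^^ n) p - (pderiv ^^ n) (q :: 'a::idom poly)"
  by (induction n) (simp_all add: pderiv_diff)

lemma higher_pderiv_minus: "(pderiv ^^ n) (- p) = - (pderiv ^^ n) (p :: 'a::idom poly)"
  by (induction n) (simp_all add: pderiv_minus)

lemma hpderiv_xz:
  "(pderiv ^^ k) ([:-z,1:] * f) = [:-z,1:] * (pderiv ^^ k) f + Polynomial.smult (of_nat k) ((pderiv ^^ (k - 1)) f)"
proof (cases k)
  case (Suc m) then show ?thesis using hpderiv_xz_Suc[of m z f] by simp
qed simp

lemma telescope_alg:
  fixes S B B1 C :: "complex poly"
  assumes "c' * m = c"
  shows "([:-z,1:] * S - Polynomial.smult c B) + Polynomial.smult c' ([:-z,1:] * B1 + Polynomial.smult m B - C)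
    = [:-z,1:] * (S + Polynomial.smult c' B1) - Polynomial.smult c' C"
proof -
  have "Polynomial.smult c' (Polynomial.smult m B) = Polynomial.smult c B" using assms by simp
  then show ?thesis by (simp add: algebra_simps smult_add_right smult_diff_right)
qed

lemma telescope:
  fixes p :: "complex poly" and U :: "nat \<Rightarrow> complex poly"
  shows "(\<Sum>k<Suc K. Polynomial.smult (1 / fact k) ((pderiv ^^ k) (p * ([:-z,1:] * U k - U (Suc k))))) =
    [:-z,1:] * (\<Sum>k<Suc K. Polynomial.smult (1 / fact k) ((pderiv ^^ k) (p * U k)))
    - Polynomial.smult (1 / fact K) ((pderiv ^^ K) (p * U (Suc K)))"
proof (induction K)
  case 0
  then show ?case by (simp add: algebra_simps)
next
  case (Suc K)
  have e1: "p * ([:-z,1:] * U (Suc K) - U (Suc (Suc K))) = [:-z,1:] * (p * U (Suc K)) - p * U (Suc (Suc K))"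
    by (simp add: algebra_simps)
  have sc: "(1 / fact (Suc K)) * of_nat (Suc K) = (1 / fact K :: complex)"
    by (simp add: divide_simps del: of_nat_Suc)
  have d: "(pderiv ^^ Suc K) (p * ([:-z,1:] * U (Suc K) - U (Suc (Suc K)))) =
     [:-z,1:] * (pderiv ^^ Suc K) (p * U (Suc K)) + Polynomial.smult (of_nat (Suc K)) ((pderiv ^^ K) (p * U (Suc K)))
     - (pderiv ^^ Suc K) (p * U (Suc (Suc K)))"
    by (simp only: e1 higher_pderiv_diff hpderiv_xz_Suc)
  have "(\<Sum>k<Suc (Suc K). Polynomial.smult (1 / fact k) ((pderiv ^^ k) (p * ([:-z,1:] * U k - U (Suc k)))))
     = (\<Sum>k<Suc K. Polynomial.smult (1 / fact k) ((pderiv ^^ k) (p * ([:-z,1:] * U k - U (Suc k)))))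
       + Polynomial.smult (1 / fact (Suc K)) ((pderiv ^^ Suc K) (p * ([:-z,1:] * U (Suc K) - U (Suc (Suc K)))))"
    by (rule sum.lessThan_Suc)
  also have "\<dots> = ([:-z,1:] * (\<Sum>k<Suc K. Polynomial.smult (1 / fact k) ((pderiv ^^ k) (p * U k)))
    - Polynomial.smult (1 / fact K) ((pderiv ^^ K) (p * U (Suc K))))
    + Polynomial.smult (1 / fact (Suc K)) ([:-z,1:] * (pderiv ^^ Suc K) (p * U (Suc K)) + Polynomial.smult (of_nat (Suc K)) ((pderiv ^^ K) (p * U (Suc K)))
     - (pderiv ^^ Suc K) (p * U (Suc (Suc K))))"
    by (simp only: Suc.IH d)
  also have "\<dots> = [:-z,1:] * ((\<Sum>k<Suc K. Polynomial.smult (1 / fact k) ((pderiv ^^ k) (p * U k)))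
     + Polynomial.smult (1 / fact (Suc K)) ((pderiv ^^ Suc K) (p * U (Suc K))))
     - Polynomial.smult (1 / fact (Suc K)) ((pderiv ^^ Suc K) (p * U (Suc (Suc K))))"
    by (rule telescope_alg[OF sc])
  also have "\<dots> = [:-z,1:] * (\<Sum>k<Suc (Suc K). Polynomial.smult (1 / fact k) ((pderiv ^^ k) (p * U k)))
     - Polynomial.smult (1 / fact (Suc K)) ((pderiv ^^ Suc K) (p * U (Suc (Suc K))))"
    by (simp only: sum.lessThan_Suc[of _ "Suc K"])
  finally show ?case .
qed

lemma hpderiv_deg_zero:
  fixes p :: "'a::{idom,ring_char_0} poly"
  assumes "degree p < k" shows "(pderiv ^^ k) p = 0"
proof -
  have "coeff ((pderiv ^^ k) p) n = 0" for n
    using assms by (simp add: coeff_higher_pderiv coeff_eq_0)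
  then show ?thesis by (simp add: poly_eq_iff)
qed

lemma dvd_pderiv_xz:
  assumes "[:-z,1:] ^ Suc j dvd p" shows "[:-z,1:] ^ j dvd pderiv (p :: complex poly)"
proof -
  from assms obtain g where p: "p = [:-z,1:] ^ Suc j * g" by (auto elim: dvdE)
  have "pderiv p = [:-z,1:] ^ Suc j * pderiv g + g * (Polynomial.smult (of_nat (Suc j)) ([:-z,1:] ^ j) * pderiv [:-z,1:])"
    unfolding p pderiv_mult pderiv_power_Suc ..
  also have "\<dots> = [:-z,1:] ^ j * ([:-z,1:] * pderiv g + Polynomial.smult (of_nat (Suc j)) g)"
    by (simp add: pderiv_pCons algebra_simps del: of_nat_Suc)
  finally show ?thesis by simp
qed

lemma dvd_hpderiv_xz:
  assumes "[:-z,1:] ^ (i + m) dvd p" shows "[:-z,1:] ^ m dvd (pderiv ^^ i) (p :: complex poly)"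
  using assms
proof (induction i arbitrary: p)
  case 0 then show ?case by simp
next
  case (Suc i)
  have "[:-z,1:] ^ (i + m) dvd pderiv p" using dvd_pderiv_xz[of z "i + m" p] Suc.prems by simp
  from Suc.IH[OF this] show ?case by (simp add: funpow_Suc_right del: funpow.simps)
qed

lemma taylor_zero_iff_dvd:
  "(\<forall>i<m. poly ((pderiv ^^ i) p) z = 0) \<longleftrightarrow> [:-z,1:] ^ m dvd (p :: complex poly)"
proof
  assume d: "[:-z,1:] ^ m dvd p"
  show "\<forall>i<m. poly ((pderiv ^^ i) p) z = 0"
  proof (intro allI impI)
    fix i assume i: "i < m"
    have "[:-z,1:] ^ Suc (m - Suc i) dvd (pderiv ^^ i) p"
      by (rule dvd_hpderiv_xz) (use d i in \<open>simp add: Suc_diff_Suc\<close>)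
    then have "[:-z,1:] dvd (pderiv ^^ i) p" by (rule dvd_trans[rotated]) (simp only: power_Suc dvd_triv_left)
    then show "poly ((pderiv ^^ i) p) z = 0" by (simp add: poly_eq_0_iff_dvd)
  qed
next
  assume "\<forall>i<m. poly ((pderiv ^^ i) p) z = 0"
  then show "[:-z,1:] ^ m dvd p"
  proof (induction m arbitrary: p)
    case 0 then show ?case by simp
  next
    case (Suc m)
    have "poly p z = 0" using Suc.prems by (metis funpow_0 zero_less_Suc)
    then obtain g where p: "p = [:-z,1:] * g" by (auto simp: poly_eq_0_iff_dvd elim: dvdE)
    have "poly ((pderiv ^^ i) g) z = 0" if "i < m" for i
    proof -
      have "poly ((pderiv ^^ Suc i) p) z = 0" using Suc.prems[rule_format, of "Suc i"] that by simp
      then have "poly (Polynomial.smult (of_nat (Suc i)) ((pderiv ^^ i) g)) z = 0"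
        unfolding p hpderiv_xz_Suc by simp
      then show ?thesis by (simp del: of_nat_Suc)
    qed
    then have "[:-z,1:] ^ m dvd g" using Suc.IH by blast
    then show ?case unfolding p by (simp only: power_Suc mult_dvd_mono[OF dvd_refl])
  qed
qed

lemma xz_shift_sum:
  fixes g :: "nat \<Rightarrow> complex poly"
  shows "(\<Sum>k<Suc Q. Polynomial.smult (1 / fact k) ((pderiv ^^ k) ([:-z,1:] * g k))) =
    [:-z,1:] * (\<Sum>k<Suc Q. Polynomial.smult (1 / fact k) ((pderiv ^^ k) (g k)))
    + (\<Sum>k<Q. Polynomial.smult (1 / fact k) ((pderiv ^^ k) (g (Suc k))))"
proof -
  have t: "Polynomial.smult (1 / fact (Suc k)) ((pderiv ^^ Suc k) ([:-z,1:] * g (Suc k))) =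
     [:-z,1:] * Polynomial.smult (1 / fact (Suc k)) ((pderiv ^^ Suc k) (g (Suc k)))
     + Polynomial.smult (1 / fact k) ((pderiv ^^ k) (g (Suc k)))" for k
  proof -
    have sc: "(1 / fact (Suc k)) * of_nat (Suc k) = (1 / fact k :: complex)"
      by (simp add: divide_simps del: of_nat_Suc)
    show ?thesis unfolding hpderiv_xz_Suc smult_add_right smult_smult sc
      by (simp add: mult_smult_right)
  qed
  show ?thesis
    unfolding sum.lessThan_Suc_shift[of _ Q] t sum.distrib
    by (simp add: sum_distrib_left algebra_simps)
qed

lemma inj_poly:
  fixes P :: "nat \<Rightarrow> complex poly"
  assumes "\<forall>k<Q. degree (P k) < mu"
    and "\<forall>p. degree p < Q \<longrightarrow> [:-z,1:] ^ mu dvd (\<Sum>k<Q. Polynomial.smult (1 / fact k) ((pderiv ^^ k) (p * P k)))"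
  shows "\<forall>k<Q. P k = 0"
  using assms
proof (induction Q arbitrary: P)
  case 0 then show ?case by simp
next
  case (Suc Q)
  define P' where "P' k = P (Suc k)" for k
  have h1: "\<forall>k<Q. degree (P' k) < mu" using Suc.prems(1) by (simp add: P'_def)
  have h2: "\<forall>p. degree p < Q \<longrightarrow> [:-z,1:] ^ mu dvd (\<Sum>k<Q. Polynomial.smult (1 / fact k) ((pderiv ^^ k) (p * P' k)))"
  proof (intro allI impI)
    fix p :: "complex poly" assume dp: "degree p < Q"
    have "degree ([:-z,1:] * p) < Suc Q"
    proof (cases "p = 0")
      case False
      have "degree ([:-z,1:] * p) = degree [:-z,1:] + degree p"
        by (rule degree_mult_eq) (use False in auto)
      then show ?thesis using dp by simp
    qed simp
    then have a: "[:-z,1:] ^ mu dvd (\<Sum>k<Suc Q. Polynomial.smult (1 / fact k) ((pderiv ^^ k) (([:-z,1:] * p) * P k)))"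
      using Suc.prems(2) by blast
    have dp': "degree p < Suc Q" using dp by simp
    have b: "[:-z,1:] ^ mu dvd (\<Sum>k<Suc Q. Polynomial.smult (1 / fact k) ((pderiv ^^ k) (p * P k)))"
      using Suc.prems(2)[rule_format, OF dp'] .
    have eq: "(\<Sum>k<Suc Q. Polynomial.smult (1 / fact k) ((pderiv ^^ k) (([:-z,1:] * p) * P k))) =
      [:-z,1:] * (\<Sum>k<Suc Q. Polynomial.smult (1 / fact k) ((pderiv ^^ k) (p * P k)))
      + (\<Sum>k<Q. Polynomial.smult (1 / fact k) ((pderiv ^^ k) (p * P' k)))"
    proof -
      have eqf: "\<And>k. ([:-z,1:] * p) * P k = [:-z,1:] * (p * P k)" by (simp only: mult.assoc)
      show ?thesis unfolding eqf P'_def by (rule xz_shift_sum[where z=z and Q=Q and g="\<lambda>k. p * P k"])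
    qed
    have b': "[:-z,1:] ^ mu dvd [:-z,1:] * (\<Sum>k<Suc Q. Polynomial.smult (1 / fact k) ((pderiv ^^ k) (p * P k)))"
      using b by (rule dvd_mult)
    have "[:-z,1:] ^ mu dvd (\<Sum>k<Suc Q. Polynomial.smult (1 / fact k) ((pderiv ^^ k) (([:-z,1:] * p) * P k)))
       - [:-z,1:] * (\<Sum>k<Suc Q. Polynomial.smult (1 / fact k) ((pderiv ^^ k) (p * P k)))"
      using a b' by (rule dvd_diff)
    then show "[:-z,1:] ^ mu dvd (\<Sum>k<Q. Polynomial.smult (1 / fact k) ((pderiv ^^ k) (p * P' k)))"
      unfolding eq by simp
  qed
  have z': "\<forall>k<Q. P (Suc k) = 0" using Suc.IH[OF h1 h2] by (simp add: P'_def)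
  have d1: "degree (1::complex poly) < Suc Q" by simp
  have "[:-z,1:] ^ mu dvd (\<Sum>k<Suc Q. Polynomial.smult (1 / fact k) ((pderiv ^^ k) (1 * P k)))"
    using Suc.prems(2)[rule_format, OF d1] .
  also have "(\<Sum>k<Suc Q. Polynomial.smult (1 / fact k) ((pderiv ^^ k) (1 * P k))) = P 0"
    unfolding sum.lessThan_Suc_shift using z' by simp
  finally have d0: "[:-z,1:] ^ mu dvd P 0" .
  have "P 0 = 0"
  proof (rule ccontr)
    assume "P 0 \<noteq> 0"
    from dvd_imp_degree_le[OF d0 this] have "mu \<le> degree (P 0)" by (simp add: degree_power_eq)
    with Suc.prems(1) show False by auto
  qed
  then show ?case using z' by (metis less_Suc_eq_0_disj)
qed

lemma coeff_xz: "coeff ([:-z,1:] * P) a = (if a = 0 then 0 else coeff P (a - 1)) - (z::complex) * coeff P a"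
  by (cases a) simp_all

lemma hpderiv_pow:
  "(pderiv ^^ j) ([:0,1:] ^ m) = Polynomial.smult (fact j * of_nat (m choose j)) ([:0,1:] ^ (m - j) :: complex poly)"
proof (induction j arbitrary: m)
  case 0 then show ?case by simp
next
  case (Suc j)
  have pd: "pderiv ([:0,1:] ^ m) = Polynomial.smult (of_nat m) ([:0,1:] ^ (m - 1) :: complex poly)"
    by (simp add: pderiv_power pderiv_pCons)
  have "(pderiv ^^ Suc j) ([:0,1:] ^ m) = (pderiv ^^ j) (pderiv ([:0,1:] ^ m) :: complex poly)"
    by (simp only: funpow_Suc_right comp_apply)
  also have "\<dots> = Polynomial.smult (of_nat m * (fact j * of_nat ((m - 1) choose j))) ([:0,1:] ^ (m - 1 - j))"
    by (simp only: pd higher_pderiv_smult Suc.IH smult_smult)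
  also have "of_nat m * (fact j * of_nat ((m - 1) choose j)) = (fact (Suc j) * of_nat (m choose Suc j) :: complex)"
  proof (cases m)
    case 0 then show ?thesis by simp
  next
    case (Suc n)
    have "Suc j * (Suc n choose Suc j) = Suc n * (n choose j)" by (rule Suc_times_binomial)
    then have "(of_nat (Suc j) * of_nat (Suc n choose Suc j) :: complex) = of_nat (Suc n) * of_nat (n choose j)"
      by (metis of_nat_mult)
    then show ?thesis using Suc by (simp add: fact_Suc algebra_simps del: of_nat_Suc binomial_Suc_Suc)
  qed
  finally show ?case by simp
qed

lemma poly_hpderiv_pow:
  "poly ((pderiv ^^ j) ([:0,1:] ^ m)) z / fact j = of_nat (m choose j) * (z::complex) ^ (m - j)"
  by (simp add: hpderiv_pow poly_monom)

lemma smult_sum_r: "Polynomial.smult c (sum f A) = (\<Sum>x\<in>A. Polynomial.smult c (f x))"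
  by (induction A rule: infinite_finite_induct) (simp_all add: smult_add_right)

text \<open>Vectors as polynomials\<close>

definition vpoly :: "complex vec \<Rightarrow> complex poly" where
  "vpoly v = (\<Sum>b<dim_vec v. monom (v $ b) b)"

definition blk :: "complex vec \<Rightarrow> nat \<Rightarrow> nat \<Rightarrow> complex vec" where
  "blk y st s = vec s (\<lambda>b. y $ (st + b))"

lemma coeff_vpoly: "coeff (vpoly v) b = (if b < dim_vec v then v $ b else 0)"
  unfolding vpoly_def coeff_sum coeff_monom by (auto simp: sum.delta)

lemma dim_blk[simp]: "dim_vec (blk y st s) = s" by (simp add: blk_def)
lemma blk_index[simp]: "b < s \<Longrightarrow> blk y st s $ b = y $ (st + b)" by (simp add: blk_def)

lemma coeff_vpoly_blk: "coeff (vpoly (blk y st s)) b = (if b < s then y $ (st + b) else 0)"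
  by (simp add: coeff_vpoly)

lemma vpoly_eqI: "dim_vec v = n \<Longrightarrow> dim_vec w = n \<Longrightarrow> vpoly v = vpoly w \<Longrightarrow> v = w"
  by (rule eq_vecI) (metis coeff_vpoly)+

lemma vpoly_zero_imp: "vpoly v = 0 \<Longrightarrow> i < dim_vec v \<Longrightarrow> v $ i = 0"
  by (metis coeff_vpoly coeff_0)

lemma degree_vpoly_less: "dim_vec v > 0 \<Longrightarrow> degree (vpoly v) < dim_vec v"
proof -
  assume "dim_vec v > 0"
  have "\<forall>b\<ge>dim_vec v. coeff (vpoly v) b = 0" by (simp add: coeff_vpoly)
  then show ?thesis using \<open>dim_vec v > 0\<close>
    by (metis degree_le gr0_implies_Suc le_imp_less_Suc less_eq_Suc_le)
qed

lemma coeff_vpoly_high: "b \<ge> dim_vec v \<Longrightarrow> coeff (vpoly v) b = 0"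
  by (simp add: coeff_vpoly)

text \<open>Divided difference operators\<close>

definition gco :: "complex \<Rightarrow> nat \<Rightarrow> nat \<Rightarrow> nat \<Rightarrow> complex" where
  "gco z j a c = (if a < c then of_nat ((c - a - 1) choose j) * z ^ (c - a - 1 - j) else 0)"

definition Gbas :: "complex \<Rightarrow> nat \<Rightarrow> nat \<Rightarrow> complex poly" where
  "Gbas z j c = (\<Sum>a<c. monom (gco z j a c) a)"

lemma coeff_Gbas: "coeff (Gbas z j c) a = gco z j a c"
  unfolding Gbas_def coeff_sum coeff_monom by (auto simp: sum.delta gco_def)

definition Gop :: "complex \<Rightarrow> nat \<Rightarrow> complex poly \<Rightarrow> complex poly" where
  "Gop z j V = (\<Sum>c<Suc (degree V). Polynomial.smult (coeff V c) (Gbas z j c))"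

lemma Gop_bound:
  assumes "\<forall>c\<ge>N. coeff V c = 0"
  shows "Gop z j V = (\<Sum>c<N. Polynomial.smult (coeff V c) (Gbas z j c))"
proof -
  have A: "(\<Sum>c<M. Polynomial.smult (coeff V c) (Gbas z j c)) = (\<Sum>c<Suc (degree V). Polynomial.smult (coeff V c) (Gbas z j c))"
    if "M \<ge> Suc (degree V)" for M
  proof -
    have "(\<Sum>c<M. Polynomial.smult (coeff V c) (Gbas z j c)) = (\<Sum>c\<in>{..<Suc (degree V)} \<union> {Suc (degree V)..<M}. Polynomial.smult (coeff V c) (Gbas z j c))"
      using that by (intro sum.cong) auto
    also have "\<dots> = (\<Sum>c<Suc (degree V). Polynomial.smult (coeff V c) (Gbas z j c)) + (\<Sum>c\<in>{Suc (degree V)..<M}. Polynomial.smult (coeff V c) (Gbas z j c))"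
      by (rule sum.union_disjoint) auto
    also have "(\<Sum>c\<in>{Suc (degree V)..<M}. Polynomial.smult (coeff V c) (Gbas z j c)) = 0"
      by (intro sum.neutral) (auto simp: coeff_eq_0)
    finally show ?thesis by simp
  qed
  show ?thesis
  proof (cases "N \<ge> Suc (degree V)")
    case True then show ?thesis unfolding Gop_def using A by simp
  next
    case False
    then have "(\<Sum>c<Suc (degree V). Polynomial.smult (coeff V c) (Gbas z j c)) = (\<Sum>c<N. Polynomial.smult (coeff V c) (Gbas z j c)) + (\<Sum>c\<in>{N..<Suc (degree V)}. Polynomial.smult (coeff V c) (Gbas z j c))"
      by (metis (no_types, lifting) atLeast0LessThan le_add_diff_inverse nat_le_linear sum.atLeastLessThan_concat zero_le)
    also have "(\<Sum>c\<in>{N..<Suc (degree V)}. Polynomial.smult (coeff V c) (Gbas z j c)) = 0"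
      using assms by (intro sum.neutral) auto
    finally show ?thesis unfolding Gop_def by simp
  qed
qed

lemma Gop_bound':
  assumes "degree V < N"
  shows "Gop z j V = (\<Sum>c<N. Polynomial.smult (coeff V c) (Gbas z j c))"
  using assms by (intro Gop_bound) (auto simp: coeff_eq_0)

lemma Gop_add: "Gop z j (V + W) = Gop z j V + Gop z j W"
proof -
  let ?N = "Suc (degree V + degree W)"
  have "degree (V + W) < ?N" "degree V < ?N" "degree W < ?N"
    using degree_add_le_max[of V W] by auto
  then show ?thesis by (simp add: Gop_bound'[where N="?N"] smult_add_left sum.distrib)
qed

lemma Gop_smult: "Gop z j (Polynomial.smult a V) = Polynomial.smult a (Gop z j V)"
proof -
  have "degree (Polynomial.smult a V) < Suc (degree V)" by (simp add: le_imp_less_Suc)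
  then have eq: "Gop z j (Polynomial.smult a V) = (\<Sum>c<Suc (degree V). Polynomial.smult (coeff (Polynomial.smult a V) c) (Gbas z j c))"
    by (rule Gop_bound')
  show ?thesis unfolding eq Gop_def[of z j V] by (simp only: coeff_smult smult_sum_r smult_smult)
qed

lemma Gop_minus: "Gop z j (- V) = - Gop z j V"
  using Gop_smult[of z j "-1" V] by simp

lemma Gop_diff: "Gop z j (V - W) = Gop z j V - Gop z j W"
  using Gop_add[of z j V "- W"] Gop_minus[of z j W] by simp

lemma Gop_0[simp]: "Gop z j 0 = 0"
  by (simp add: Gop_def)


lemma Gbas_zero: "c \<le> j \<Longrightarrow> Gbas z j c = 0"
  by (auto simp: poly_eq_iff coeff_Gbas gco_def intro!: binomial_eq_0)

lemma Gop_zero_high: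
  assumes "degree V \<le> j" shows "Gop z j V = 0"
  unfolding Gop_def using assms by (intro sum.neutral) (auto simp: Gbas_zero)

lemma coeff_Gbas_high: "c \<le> j + a \<Longrightarrow> coeff (Gbas z j c) a = 0"
  by (auto simp: coeff_Gbas gco_def intro!: binomial_eq_0)

lemma gco_rec: "gco z (Suc i) b c - z * gco z (Suc i) (Suc b) c = gco z i (Suc b) c"
proof (cases "Suc b < c")
  case False
  then show ?thesis by (auto simp: gco_def)
next
  case True
  then obtain m where c: "c = Suc (Suc b) + m" by (metis less_iff_Suc_add add_Suc_shift add_Suc)
  have e1: "c - b - 1 = Suc m" "c - Suc b - 1 = m" using c by auto
  show ?thesis
  proof (cases "Suc i \<le> m")
    case True
    then obtain t where m: "m = Suc i + t" using le_Suc_ex by blast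
    show ?thesis using c unfolding gco_def e1 m
      by (simp add: algebra_simps del: binomial_Suc_Suc) (simp add: binomial_Suc_Suc algebra_simps)
  next
    case False
    then have "m choose Suc i = 0" by (simp add: binomial_eq_0)
    moreover have "m - i = 0" using False by simp
    ultimately show ?thesis using c unfolding gco_def e1
      by (simp add: binomial_Suc_Suc)
  qed
qed

lemma gco0_rec: "gco z 0 b c - z * gco z 0 (Suc b) c = (if c = Suc b then 1 else 0)"
proof (cases "Suc b < c")
  case False
  then show ?thesis by (auto simp: gco_def)
next
  case True
  then obtain m where c: "c = Suc (Suc b) + m" by (metis less_iff_Suc_add add_Suc_shift add_Suc)
  then show ?thesis by (simp add: gco_def)
qed

lemma coeff_Gop: "coeff (Gop z j V) a = (\<Sum>c<Suc (degree V). coeff V c * gco z j a c)"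
  unfolding Gop_def coeff_sum coeff_smult coeff_Gbas ..

definition Hop :: "complex \<Rightarrow> nat \<Rightarrow> complex poly \<Rightarrow> complex poly" where
  "Hop z j V = (if j = 0 then V else Gop z (j - 1) V)"

lemma Hop_diff: "Hop z j (V - W) = Hop z j V - Hop z j W"
  by (simp add: Hop_def Gop_diff)
lemma Hop_add: "Hop z j (V + W) = Hop z j V + Hop z j W"
  by (simp add: Hop_def Gop_add)
lemma Hop_0[simp]: "Hop z j 0 = 0"
  by (simp add: Hop_def)

lemma R1_coeff: "coeff (Hop z j V) (Suc b) = coeff ([:-z,1:] * Hop z (Suc j) V) (Suc b)"
proof (cases j)
  case 0
  have "coeff ([:-z,1:] * Hop z (Suc j) V) (Suc b) = coeff (Gop z 0 V) b - z * coeff (Gop z 0 V) (Suc b)"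
    using 0 by (simp add: Hop_def coeff_xz)
  also have "\<dots> = (\<Sum>c<Suc (degree V). coeff V c * (gco z 0 b c - z * gco z 0 (Suc b) c))"
    by (simp add: coeff_Gop sum_distrib_left sum_subtractf algebra_simps)
  also have "\<dots> = (\<Sum>c<Suc (degree V). (if c = Suc b then coeff V c else 0))"
    by (rule sum.cong) (simp_all add: gco0_rec)
  also have "\<dots> = coeff V (Suc b)"
    by (auto simp: sum.delta coeff_eq_0 simp del: sum.lessThan_Suc)
  finally show ?thesis using 0 by (simp add: Hop_def)
next
  case (Suc i)
  have "coeff ([:-z,1:] * Hop z (Suc j) V) (Suc b) = coeff (Gop z (Suc i) V) b - z * coeff (Gop z (Suc i) V) (Suc b)"
    using Suc by (simp add: Hop_def coeff_xz)
  also have "\<dots> = (\<Sum>c<Suc (degree V). coeff V c * (gco z (Suc i) b c - z * gco z (Suc i) (Suc b) c))"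
    by (simp add: coeff_Gop sum_distrib_left sum_subtractf algebra_simps)
  also have "\<dots> = coeff (Gop z i V) (Suc b)"
    by (simp add: gco_rec coeff_Gop)
  finally show ?thesis using Suc by (simp add: Hop_def)
qed

lemma R1: "\<exists>\<kappa>. Hop z j V = [:-z,1:] * Hop z (Suc j) V + [:\<kappa>:]"
proof
  let ?k = "coeff (Hop z j V - [:-z,1:] * Hop z (Suc j) V) 0"
  show "Hop z j V = [:-z,1:] * Hop z (Suc j) V + [:?k:]"
  proof (rule poly_eqI)
    fix a show "coeff (Hop z j V) a = coeff ([:-z,1:] * Hop z (Suc j) V + [:?k:]) a"
      by (cases a) (simp_all only: R1_coeff coeff_add coeff_pCons_0 coeff_pCons_Suc coeff_0 coeff_diff, simp_all)
  qed
qed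

lemma xz_const_zero:
  assumes "[:-z,1:] * P = [:\<kappa>:]" shows "P = (0 :: complex poly)"
proof (rule ccontr)
  assume "P \<noteq> 0"
  then have "degree ([:-z,1:] * P) = 1 + degree P" by (subst degree_mult_eq) auto
  then show False using assms by simp
qed

lemma grp_aux: "a + c = b + d \<Longrightarrow> a - b = d - (c :: 'a :: ab_group_add)"
  by (simp add: algebra_simps)

lemma R2: "Hop z j (Gop z 0 W) = Hop z (Suc j) W"
proof (induction j)
  case 0 then show ?case by (simp add: Hop_def)
next
  case (Suc j)
  obtain k1 where k1: "Hop z j (Gop z 0 W) = [:-z,1:] * Hop z (Suc j) (Gop z 0 W) + [:k1:]" using R1 by blast
  obtain k2 where k2: "Hop z (Suc j) W = [:-z,1:] * Hop z (Suc (Suc j)) W + [:k2:]" using R1 by blast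
  have "[:-z,1:] * Hop z (Suc j) (Gop z 0 W) + [:k1:] = [:-z,1:] * Hop z (Suc (Suc j)) W + [:k2:]"
    using k1 k2 Suc.IH by metis
  from grp_aux[OF this]
  have "[:-z,1:] * (Hop z (Suc j) (Gop z 0 W) - Hop z (Suc (Suc j)) W) = [:k2:] - [:k1:]"
    by (simp only: right_diff_distrib)
  then have "[:-z,1:] * (Hop z (Suc j) (Gop z 0 W) - Hop z (Suc (Suc j)) W) = [:k2 - k1:]"
    by simp
  then show ?case using xz_const_zero by fastforce
qed

lemma Hop_zero_high:
  assumes "degree V < j" shows "Hop z j V = 0"
  using assms by (simp add: Hop_def Gop_zero_high)

lemma sum_blocks: "(\<Sum>c<(ca::nat)*cb. f c) = (\<Sum>k<ca. \<Sum>b<cb. f (k*cb + b) :: 'a :: comm_monoid_add)"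
proof (induction ca)
  case 0 then show ?case by simp
next
  case (Suc ca)
  have "(\<Sum>c<Suc ca*cb. f c) = (\<Sum>c\<in>{0..<ca*cb}. f c) + (\<Sum>c\<in>{ca*cb..<ca*cb+cb}. f c)"
    by (simp add: lessThan_atLeast0 sum.atLeastLessThan_concat add.commute)
  also have "(\<Sum>c\<in>{ca*cb..<ca*cb+cb}. f c) = (\<Sum>b<cb. f (ca*cb + b))"
    using sum.shift_bounds_nat_ivl[of f 0 "ca*cb" cb] by (simp add: lessThan_atLeast0 add.commute)
  finally show ?case using Suc by (simp add: lessThan_atLeast0)
qed

lemma mv_entry: "i < dim_row A \<Longrightarrow> dim_vec v = dim_col A \<Longrightarrow> (A *\<^sub>v v) $ i = (\<Sum>j<dim_col A. A $$ (i,j) * v $ j)"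
  by (simp add: scalar_prod_def lessThan_atLeast0)

lemma kron_carrier: "A \<in> carrier_mat ra ca \<Longrightarrow> B \<in> carrier_mat rb cb \<Longrightarrow> kron A B \<in> carrier_mat (ra*rb) (ca*cb)"
  by (simp add: kron_def)

lemma kron_index: "i < dim_row A * dim_row B \<Longrightarrow> j < dim_col A * dim_col B \<Longrightarrow>
  kron A B $$ (i,j) = A $$ (i div dim_row B, j div dim_col B) * B $$ (i mod dim_row B, j mod dim_col B)"
  by (simp add: kron_def)

lemma blk_carrier: "blk y st s \<in> carrier_vec s"
  unfolding blk_def by simp

lemma vpoly_add: "dim_vec v = dim_vec w \<Longrightarrow> vpoly (v + w) = vpoly v + vpoly w"
  by (rule poly_eqI) (simp add: coeff_vpoly)

lemma vpoly_minus: "vpoly (- v) = - vpoly v"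
  by (rule poly_eqI) (simp add: coeff_vpoly)

lemma vpoly_diff: "dim_vec v = dim_vec w \<Longrightarrow> vpoly (v - w) = vpoly v - vpoly w"
  by (rule poly_eqI) (simp add: coeff_vpoly)

lemma vpoly_zero[simp]: "vpoly (0\<^sub>v n) = 0"
  by (rule poly_eqI) (simp add: coeff_vpoly)

lemma vpoly_empty: "dim_vec v = 0 \<Longrightarrow> vpoly v = 0"
  by (simp add: vpoly_def)

lemma blk_add: "st + s \<le> dim_vec w \<Longrightarrow> dim_vec v = dim_vec w \<Longrightarrow> blk (v + w) st s = blk v st s + blk w st s"
  by (rule eq_vecI) auto

lemma blk_minus: "st + s \<le> dim_vec v \<Longrightarrow> blk (- v) st s = - blk v st s"
  by (rule eq_vecI) auto

lemma blk_diff: "st + s \<le> dim_vec w \<Longrightarrow> dim_vec v = dim_vec w \<Longrightarrow> blk (v - w) st s = blk v st s - blk w st s"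
  by (rule eq_vecI) auto

lemma blk_append_left: "st + s \<le> dim_vec v \<Longrightarrow> blk (v @\<^sub>v w) st s = blk v st s"
  by (rule eq_vecI) auto

lemma blk_append_right: "st + s \<le> dim_vec w \<Longrightarrow> blk (v @\<^sub>v w) (dim_vec v + st) s = blk w st s"
  by (rule eq_vecI) auto

lemma blk_vec_first: "st + s \<le> n \<Longrightarrow> blk (vec_first v n) st s = blk v st s"
  by (rule eq_vecI) (auto simp: vec_first_def)

lemma blk_vec_last: "v \<in> carrier_vec (n + m) \<Longrightarrow> st + s \<le> m \<Longrightarrow> blk (vec_last v m) st s = blk v (n + st) s"
  by (rule eq_vecI) (auto simp: vec_last_def add.assoc)

lemma kron_blk:
  assumes A: "A \<in> carrier_mat ra ca" and B: "B \<in> carrier_mat rb cb" and v: "v \<in> carrier_vec (ca*cb)" and k: "k < ra"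
  shows "vpoly (blk (kron A B *\<^sub>v v) (k*rb) rb) = (\<Sum>k'<ca. Polynomial.smult (A $$ (k,k')) (vpoly (B *\<^sub>v blk v (k'*cb) cb)))"
proof (rule poly_eqI)
  fix b
  show "coeff (vpoly (blk (kron A B *\<^sub>v v) (k*rb) rb)) b = coeff (\<Sum>k'<ca. Polynomial.smult (A $$ (k,k')) (vpoly (B *\<^sub>v blk v (k'*cb) cb))) b"
  proof (cases "b < rb")
    case False
    then show ?thesis using B by (simp add: coeff_vpoly coeff_sum)
  next
    case True
    have kb: "k * rb + b < ra * rb"
    proof -
      have "k * rb + b < Suc k * rb" using True by simp
      also have "Suc k * rb \<le> ra * rb" using k by (intro mult_le_mono1) simp
      finally show ?thesis .
    qed
    have dk: "(k * rb + b) div rb = k" "(k * rb + b) mod rb = b" using True by auto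
    have "coeff (vpoly (blk (kron A B *\<^sub>v v) (k*rb) rb)) b = (kron A B *\<^sub>v v) $ (k*rb + b)"
      using True by (simp add: coeff_vpoly)
    also have "\<dots> = (\<Sum>c<ca*cb. kron A B $$ (k*rb + b, c) * v $ c)"
      using kron_carrier[OF A B] v kb by (subst mv_entry) auto
    also have "\<dots> = (\<Sum>k'<ca. \<Sum>b'<cb. kron A B $$ (k*rb + b, k'*cb + b') * v $ (k'*cb + b'))"
      by (rule sum_blocks)
    also have "\<dots> = (\<Sum>k'<ca. \<Sum>b'<cb. A $$ (k, k') * (B $$ (b, b') * v $ (k'*cb + b')))"
    proof (intro sum.cong refl)
      fix k' b' assume k': "k' \<in> {..<ca}" and b': "b' \<in> {..<cb}"
      have "k'*cb + b' < ca * cb"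
      proof -
        have "k' * cb + b' < Suc k' * cb" using b' by simp
        also have "Suc k' * cb \<le> ca * cb" using k' by (intro mult_le_mono1) simp
        finally show ?thesis .
      qed
      moreover have "(k'*cb + b') div cb = k'" "(k'*cb + b') mod cb = b'" using b' by auto
      ultimately show "kron A B $$ (k*rb + b, k'*cb + b') * v $ (k'*cb + b') = A $$ (k, k') * (B $$ (b, b') * v $ (k'*cb + b'))"
        using A B kb dk by (simp add: kron_index)
    qed
    also have "\<dots> = coeff (\<Sum>k'<ca. Polynomial.smult (A $$ (k,k')) (vpoly (B *\<^sub>v blk v (k'*cb) cb))) b"
      using True B by (simp add: coeff_sum coeff_vpoly scalar_prod_def sum_distrib_left lessThan_atLeast0)
    finally show ?thesis .
  qed
qed

lemma smult_delta_sum: "(\<Sum>k'<(ca::nat). Polynomial.smult (if k' = t then 1 else 0) (X k')) = (if t < ca then X t else (0::complex poly))"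
proof -
  have "(\<Sum>k'<ca. Polynomial.smult (if k' = t then 1 else 0) (X k')) = (\<Sum>k'<ca. if k' = t then X k' else 0)"
    by (rule sum.cong) auto
  then show ?thesis by (simp add: sum.delta)
qed

lemma kron_one_blk:
  assumes B: "B \<in> carrier_mat rb cb" and v: "v \<in> carrier_vec (ra*cb)" and k: "k < ra"
  shows "vpoly (blk (kron (1\<^sub>m ra) B *\<^sub>v v) (k*rb) rb) = vpoly (B *\<^sub>v blk v (k*cb) cb)"
proof -
  have "vpoly (blk (kron (1\<^sub>m ra) B *\<^sub>v v) (k*rb) rb) = (\<Sum>k'<ra. Polynomial.smult (1\<^sub>m ra $$ (k,k')) (vpoly (B *\<^sub>v blk v (k'*cb) cb)))"
    by (rule kron_blk[OF one_carrier_mat B v k])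
  also have "\<dots> = (\<Sum>k'<ra. Polynomial.smult (if k' = k then 1 else 0) (vpoly (B *\<^sub>v blk v (k'*cb) cb)))"
    using k by (intro sum.cong) auto
  finally show ?thesis using k by (simp only: smult_delta_sum) simp
qed

lemma shift_mat_carrier: "shift_mat m \<in> carrier_mat m m" by (simp add: shift_mat_def)

lemma kron_shift_blk:
  assumes B: "B \<in> carrier_mat rb cb" and v: "v \<in> carrier_vec (ra*cb)" and k: "k < ra"
  shows "vpoly (blk (kron (shift_mat ra) B *\<^sub>v v) (k*rb) rb) =
    (if Suc k < ra then vpoly (B *\<^sub>v blk v (Suc k*cb) cb) else 0)"
proof -
  have "vpoly (blk (kron (shift_mat ra) B *\<^sub>v v) (k*rb) rb) = (\<Sum>k'<ra. Polynomial.smult (shift_mat ra $$ (k,k')) (vpoly (B *\<^sub>v blk v (k'*cb) cb)))"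
    by (rule kron_blk[OF shift_mat_carrier B v k])
  also have "\<dots> = (\<Sum>k'<ra. Polynomial.smult (if k' = Suc k then 1 else 0) (vpoly (B *\<^sub>v blk v (k'*cb) cb)))"
    using k by (intro sum.cong) (auto simp: shift_mat_def)
  finally show ?thesis by (simp only: smult_delta_sum)
qed

lemma ellphi_carrier: "ellphi q nu' \<in> carrier_mat q (nu' - q)"
  unfolding ellphi_def by (rule mult_carrier_mat) (auto simp: mat_of_cols_def mat_of_rows_def)

lemma ellphi_index: "i < q \<Longrightarrow> j < nu' - q \<Longrightarrow> ellphi q nu' $$ (i,j) = (if Suc i = q \<and> j = 0 then 1 else 0)"
  unfolding ellphi_def
  by (simp add: scalar_prod_def mat_of_cols_index mat_of_rows_index unit_vec_def)
    (auto simp: mat_of_cols_def mat_of_rows_def)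

lemma kron_ellphi_blk:
  assumes B: "B \<in> carrier_mat rb cb" and v: "v \<in> carrier_vec ((nu' - q)*cb)" and k: "k < q" and nq: "q < nu'"
  shows "vpoly (blk (kron (ellphi q nu') B *\<^sub>v v) (k*rb) rb) =
    (if Suc k = q then vpoly (B *\<^sub>v blk v 0 cb) else 0)"
proof -
  have "vpoly (blk (kron (ellphi q nu') B *\<^sub>v v) (k*rb) rb) = (\<Sum>k'<nu' - q. Polynomial.smult (ellphi q nu' $$ (k,k')) (vpoly (B *\<^sub>v blk v (k'*cb) cb)))"
    by (rule kron_blk[OF ellphi_carrier B v k])
  also have "\<dots> = (\<Sum>k'<nu' - q. Polynomial.smult (if k' = 0 then (if Suc k = q then 1 else 0) else 0) (vpoly (B *\<^sub>v blk v (k'*cb) cb)))"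
    using k by (intro sum.cong) (auto simp: ellphi_index)
  also have "\<dots> = (\<Sum>k'<nu' - q. Polynomial.smult (if Suc k = q then 1 else 0) (if k' = 0 then vpoly (B *\<^sub>v blk v (k'*cb) cb) else 0))"
    by (intro sum.cong) auto
  also have "\<dots> = Polynomial.smult (if Suc k = q then 1 else 0) (vpoly (B *\<^sub>v blk v 0 cb))"
    using nq by (simp add: smult_sum_r[symmetric] sum.delta)
  finally show ?thesis by simp
qed

lemma F0_carrier: "mderiv 0 (Fpoly r j) z \<in> carrier_mat (r - j) (r - j - 1)"
  by (simp add: mderiv_def Fpoly_def)
lemma F1_carrier: "mderiv 1 (Fpoly r j) z \<in> carrier_mat (r - j) (r - j - 1)"
  by (simp add: mderiv_def Fpoly_def)

lemma F0_vpoly: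
  assumes j: "j < r" and w: "w \<in> carrier_vec (r - j - 1)"
  shows "vpoly (mderiv 0 (Fpoly r j) z *\<^sub>v w) = [:-z,1:] * vpoly w"
proof (rule poly_eqI)
  fix b
  show "coeff (vpoly (mderiv 0 (Fpoly r j) z *\<^sub>v w)) b = coeff ([:-z,1:] * vpoly w) b"
  proof (cases "b < r - j")
    case False
    then show ?thesis unfolding coeff_xz using w j by (auto simp: coeff_vpoly mderiv_def Fpoly_def)
  next
    case True
    have "coeff (vpoly (mderiv 0 (Fpoly r j) z *\<^sub>v w)) b = (\<Sum>c<r - j - 1. (if b = c then -z else if b = c + 1 then 1 else 0) * w $ c)"
      using True w by (auto simp: coeff_vpoly mderiv_def Fpoly_def scalar_prod_def lessThan_atLeast0 intro!: sum.cong)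
    also have "\<dots> = (\<Sum>c<r - j - 1. (if c = b then -z * w $ c else 0) + (if c = b - 1 \<and> b \<noteq> 0 then w $ c else 0))"
      by (intro sum.cong) auto
    also have "\<dots> = (if b < r - j - 1 then -z * w $ b else 0) + (if b \<noteq> 0 then w $ (b - 1) else 0)"
      using True by (simp add: sum.distrib sum.delta; arith)
    also have "\<dots> = coeff ([:-z,1:] * vpoly w) b"
      unfolding coeff_xz using True w by (auto simp: coeff_vpoly)
    finally show ?thesis .
  qed
qed

lemma F1_vpoly:
  assumes j: "j < r" and w: "w \<in> carrier_vec (r - j - 1)"
  shows "vpoly (mderiv 1 (Fpoly r j) z *\<^sub>v w) = - vpoly w"
proof (rule poly_eqI)
  fix b
  show "coeff (vpoly (mderiv 1 (Fpoly r j) z *\<^sub>v w)) b = coeff (- vpoly w) b"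
  proof (cases "b < r - j")
    case False
    then show ?thesis using w j by (auto simp: coeff_vpoly mderiv_def Fpoly_def)
  next
    case True
    have "coeff (vpoly (mderiv 1 (Fpoly r j) z *\<^sub>v w)) b = (\<Sum>c<r - j - 1. (if b = c then -1 else 0) * w $ c)"
      using True w by (auto simp: coeff_vpoly mderiv_def Fpoly_def scalar_prod_def lessThan_atLeast0 pderiv_pCons intro!: sum.cong)
    also have "\<dots> = (\<Sum>c<r - j - 1. (if c = b then - w $ c else 0))"
      by (intro sum.cong) auto
    also have "\<dots> = coeff (- vpoly w) b"
      using True w by (simp add: sum.delta coeff_vpoly)
    finally show ?thesis .
  qed
qed

lemma Gmat_vpoly:
  assumes M: "M \<in> carrier_mat (r - j) r" and w: "w \<in> carrier_vec r" and j: "j < r"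
    and ent: "\<And>a c. a < r - j \<Longrightarrow> c < r \<Longrightarrow> M $$ (a, c) = gco z j a c"
  shows "vpoly (M *\<^sub>v w) = Gop z j (vpoly w)"
proof (rule poly_eqI)
  fix a
  have G: "Gop z j (vpoly w) = (\<Sum>c<r. Polynomial.smult (coeff (vpoly w) c) (Gbas z j c))"
    using w by (intro Gop_bound) (auto simp: coeff_vpoly)
  have R: "coeff (Gop z j (vpoly w)) a = (\<Sum>c<r. w $ c * gco z j a c)"
    unfolding G coeff_sum coeff_smult coeff_Gbas using w by (intro sum.cong) (auto simp: coeff_vpoly)
  show "coeff (vpoly (M *\<^sub>v w)) a = coeff (Gop z j (vpoly w)) a"
  proof (cases "a < r - j")
    case True
    then show ?thesis unfolding R using M w
      by (auto simp: coeff_vpoly scalar_prod_def lessThan_atLeast0 ent intro!: sum.cong)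
  next
    case False
    have "gco z j a c = 0" if "c < r" for c
      using False that by (auto simp: gco_def intro!: binomial_eq_0)
    then show ?thesis unfolding R using M w False by (simp add: coeff_vpoly)
  qed
qed

lemma Gpoly_entry: "a < r \<Longrightarrow> c < r \<Longrightarrow> mderiv j (Gpoly r) z $$ (a,c) / fact j = gco z j a c"
  by (auto simp: mderiv_def Gpoly_def gco_def poly_hpderiv_pow)

lemma Gj_vpoly:
  assumes w: "w \<in> carrier_vec r" and j: "j < r"
  shows "vpoly (((1 / fact j) \<cdot>\<^sub>m Gj0_deriv r j z) *\<^sub>v w) = Gop z j (vpoly w)"
proof (rule Gmat_vpoly[OF _ w j])
  show "(1 / fact j) \<cdot>\<^sub>m Gj0_deriv r j z \<in> carrier_mat (r - j) r" by (simp add: Gj0_deriv_def)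
  fix a c assume a: "a < r - j" and c: "c < r"
  then have "a < r" by simp
  then show "((1 / fact j) \<cdot>\<^sub>m Gj0_deriv r j z) $$ (a, c) = gco z j a c"
    using a c Gpoly_entry[of a r c j z] by (simp add: Gj0_deriv_def)
qed

lemma G0_carrier: "mderiv 0 (Gpoly r) z \<in> carrier_mat r r"
  by (simp add: mderiv_def Gpoly_def)

lemma G0_vpoly:
  assumes w: "w \<in> carrier_vec r" and r: "0 < r"
  shows "vpoly (mderiv 0 (Gpoly r) z *\<^sub>v w) = Gop z 0 (vpoly w)"
proof (rule Gmat_vpoly[OF _ w r])
  show "mderiv 0 (Gpoly r) z \<in> carrier_mat (r - 0) r" using G0_carrier by simp
  fix a c assume a: "a < r - 0" and c: "c < r"
  then show "mderiv 0 (Gpoly r) z $$ (a, c) = gco z 0 a c"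
    using Gpoly_entry[of a r c 0 z] by simp
qed

lemma Gj_carrier: "(1 / fact j) \<cdot>\<^sub>m Gj0_deriv r j z \<in> carrier_mat (r - j) r"
  by (simp add: Gj0_deriv_def)

lemma Dblock_carrier: "Dblock q r nu' z \<in> carrier_mat ((nu' - q) * r) ((nu' - q) * r)"
  unfolding Dblock_def by (rule minus_carrier_mat[OF kron_carrier[OF shift_mat_carrier G0_carrier]])

lemma Dblock_blk:
  assumes v: "v \<in> carrier_vec ((nu' - q) * r)" and l: "l < nu' - q" and r: "0 < r"
  shows "vpoly (blk (Dblock q r nu' z *\<^sub>v v) (l*r) r) =
    vpoly (blk v (l*r) r) - (if Suc l < nu' - q then Gop z 0 (vpoly (blk v (Suc l * r) r)) else 0)"
proof -
  let ?n = "nu' - q"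
  have c1: "kron (1\<^sub>m ?n) (1\<^sub>m r) \<in> carrier_mat (?n * r) (?n * r)" by (rule kron_carrier) auto
  have c2: "kron (shift_mat ?n) (mderiv 0 (Gpoly r) z) \<in> carrier_mat (?n * r) (?n * r)"
    by (rule kron_carrier[OF shift_mat_carrier G0_carrier])
  have lr: "l * r + r \<le> ?n * r"
    using l by (metis add.commute mult_Suc mult_le_mono1 Suc_leI)
  have D: "Dblock q r nu' z *\<^sub>v v = kron (1\<^sub>m ?n) (1\<^sub>m r) *\<^sub>v v - kron (shift_mat ?n) (mderiv 0 (Gpoly r) z) *\<^sub>v v"
    unfolding Dblock_def using c1 c2 v by (rule minus_mult_distrib_mat_vec)
  have "blk (Dblock q r nu' z *\<^sub>v v) (l*r) r =
      blk (kron (1\<^sub>m ?n) (1\<^sub>m r) *\<^sub>v v) (l*r) r - blk (kron (shift_mat ?n) (mderiv 0 (Gpoly r) z) *\<^sub>v v) (l*r) r"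
    unfolding D by (rule blk_diff) (use c1 c2 v lr in auto)
  then have "vpoly (blk (Dblock q r nu' z *\<^sub>v v) (l*r) r) =
      vpoly (blk (kron (1\<^sub>m ?n) (1\<^sub>m r) *\<^sub>v v) (l*r) r) - vpoly (blk (kron (shift_mat ?n) (mderiv 0 (Gpoly r) z) *\<^sub>v v) (l*r) r)"
    by (simp add: vpoly_diff)
  also have "vpoly (blk (kron (1\<^sub>m ?n) (1\<^sub>m r) *\<^sub>v v) (l*r) r) = vpoly (blk v (l*r) r)"
    using kron_one_blk[of "1\<^sub>m r" r r v ?n l] v l by (simp add: one_mult_mat_vec blk_carrier)
  also have "vpoly (blk (kron (shift_mat ?n) (mderiv 0 (Gpoly r) z) *\<^sub>v v) (l*r) r) =
      (if Suc l < ?n then vpoly (mderiv 0 (Gpoly r) z *\<^sub>v blk v (Suc l * r) r) else 0)"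
    by (rule kron_shift_blk[OF G0_carrier v l])
  also have "\<dots> = (if Suc l < ?n then Gop z 0 (vpoly (blk v (Suc l * r) r)) else 0)"
    using r by (simp add: G0_vpoly blk_carrier)
  finally show ?thesis .
qed

lemma four_block_C0:
  assumes A: "A \<in> carrier_mat nr1 nc1" and B: "B \<in> carrier_mat nr1 nc2" and D: "D \<in> carrier_mat nr2 nc2"
    and y: "y \<in> carrier_vec (nc1 + nc2)"
  shows "four_block_mat A B (0\<^sub>m nr2 nc1) D *\<^sub>v y = (A *\<^sub>v vec_first y nc1 + B *\<^sub>v vec_last y nc2) @\<^sub>v (D *\<^sub>v vec_last y nc2)"
proof -
  have y1: "vec_first y nc1 \<in> carrier_vec nc1" and y2: "vec_last y nc2 \<in> carrier_vec nc2" by auto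
  have "four_block_mat A B (0\<^sub>m nr2 nc1) D *\<^sub>v y = four_block_mat A B (0\<^sub>m nr2 nc1) D *\<^sub>v (vec_first y nc1 @\<^sub>v vec_last y nc2)"
    using vec_first_last_append[OF y] by simp
  also have "\<dots> = (A *\<^sub>v vec_first y nc1 + B *\<^sub>v vec_last y nc2) @\<^sub>v (0\<^sub>m nr2 nc1 *\<^sub>v vec_first y nc1 + D *\<^sub>v vec_last y nc2)"
    by (rule four_block_mat_mult_vec[OF A B _ D y1 y2]) simp
  also have "0\<^sub>m nr2 nc1 *\<^sub>v vec_first y nc1 + D *\<^sub>v vec_last y nc2 = D *\<^sub>v vec_last y nc2"
  proof -
    have "0\<^sub>m nr2 nc1 *\<^sub>v vec_first y nc1 = 0\<^sub>v nr2" by (rule eq_vecI) auto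
    moreover have "D *\<^sub>v vec_last y nc2 \<in> carrier_vec nr2" using D by simp
    ultimately show ?thesis by simp
  qed
  finally show ?thesis .
qed

lemma F0c: "mderiv 0 (Fpoly r j) z \<in> carrier_mat (r - j) (r - Suc j)"
  using F0_carrier[of r j z] by simp
lemma F1c: "mderiv 1 (Fpoly r j) z \<in> carrier_mat (r - j) (r - Suc j)"
  using F1_carrier[of r j z] by simp

lemma Fblock_carrier:
  "kron (1\<^sub>m q) (mderiv 0 (Fpoly r j) z) + kron (shift_mat q) (mderiv 1 (Fpoly r j) z) \<in> carrier_mat (q * (r - j)) (q * (r - Suc j))"
  by (rule add_carrier_mat[OF kron_carrier[OF shift_mat_carrier F1c]])

lemma Bblock_carrier:
  "- kron (ellphi q nu') ((1 / fact j) \<cdot>\<^sub>m Gj0_deriv r j z) \<in> carrier_mat (q * (r - j)) ((nu' - q) * r)"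
  by (auto intro!: kron_carrier ellphi_carrier Gj_carrier)

lemma Kbar_carrier: "Kbar q r nu' z j \<in> carrier_mat (q * (r - j) + (nu' - q) * r) (q * (r - Suc j) + (nu' - q) * r)"
proof -
  consider (a) "j + 2 \<le> r" | (b) "j + 1 = r" | (c) "r \<le> j" by linarith
  then show ?thesis
  proof cases
    case a
    have c: "Kbar q r nu' z j = four_block_mat (kron (1\<^sub>m q) (mderiv 0 (Fpoly r j) z) + kron (shift_mat q) (mderiv 1 (Fpoly r j) z))
         (- kron (ellphi q nu') ((1 / fact j) \<cdot>\<^sub>m Gj0_deriv r j z))
         (0\<^sub>m ((nu' - q) * r) (q * (r - j - 1)))
         (Dblock q r nu' z)"
      unfolding Kbar_def using a by simp
    show ?thesis unfolding c by (rule four_block_carrier_mat[OF Fblock_carrier Dblock_carrier])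
  next
    case b
    then show ?thesis unfolding Kbar_def using Dblock_carrier[of q r nu' z]
      by (auto simp: four_block_carrier_mat)
  next
    case c
    then show ?thesis unfolding Kbar_def using Dblock_carrier[of q r nu' z] by auto
  qed
qed

lemma MB:
  assumes y: "y \<in> carrier_vec (q * (r - Suc j) + (nu' - q) * r)" and l: "l < nu' - q" and r: "0 < r"
  shows "vpoly (blk (Kbar q r nu' z j *\<^sub>v y) (q * (r - j) + l * r) r) =
    vpoly (blk y (q * (r - Suc j) + l * r) r)
    - (if Suc l < nu' - q then Gop z 0 (vpoly (blk y (q * (r - Suc j) + Suc l * r) r)) else 0)"
proof -
  let ?n = "nu' - q"
  have lr: "\<And>l. l < ?n \<Longrightarrow> l * r + r \<le> ?n * r"
    by (metis add.commute mult_Suc mult_le_mono1 Suc_leI)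
  have b1: "blk (vec_last y (?n*r)) (l*r) r = blk y (q*(r-Suc j) + l*r) r"
    by (rule blk_vec_last[OF y]) (rule lr[OF l])
  have b2: "blk (vec_last y (?n*r)) (Suc l*r) r = blk y (q*(r-Suc j) + Suc l*r) r" if "Suc l < ?n"
    by (rule blk_vec_last[OF y]) (rule lr[OF that])
  have key: "vpoly (blk (Dblock q r nu' z *\<^sub>v vec_last y (?n * r)) (l * r) r) =
    vpoly (blk y (q * (r - Suc j) + l * r) r)
    - (if Suc l < ?n then Gop z 0 (vpoly (blk y (q * (r - Suc j) + Suc l * r) r)) else 0)"
    using Dblock_blk[of "vec_last y (?n * r)" nu' q r l z] l r y b1 b2
    by (cases "Suc l < ?n") simp_all
  consider (a) "j + 2 \<le> r" | (b) "j + 1 = r" | (c) "r \<le> j" by linarith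
  then show ?thesis
  proof cases
    case a
    have "Kbar q r nu' z j *\<^sub>v y = ((kron (1\<^sub>m q) (mderiv 0 (Fpoly r j) z) + kron (shift_mat q) (mderiv 1 (Fpoly r j) z)) *\<^sub>v vec_first y (q * (r - Suc j))
       + (- kron (ellphi q nu') ((1 / fact j) \<cdot>\<^sub>m Gj0_deriv r j z)) *\<^sub>v vec_last y (?n * r))
       @\<^sub>v (Dblock q r nu' z *\<^sub>v vec_last y (?n * r))"
      unfolding Kbar_def using a four_block_C0[OF Fblock_carrier Bblock_carrier Dblock_carrier y] by simp
    moreover have "dim_vec ((kron (1\<^sub>m q) (mderiv 0 (Fpoly r j) z) + kron (shift_mat q) (mderiv 1 (Fpoly r j) z)) *\<^sub>v vec_first y (q * (r - Suc j))
       + (- kron (ellphi q nu') ((1 / fact j) \<cdot>\<^sub>m Gj0_deriv r j z)) *\<^sub>v vec_last y (?n * r)) = q * (r - j)"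
      using Fblock_carrier[of q r j z] Bblock_carrier[of q nu' j r z] by simp
    moreover have "dim_vec (Dblock q r nu' z *\<^sub>v vec_last y (?n * r)) = ?n * r"
      using Dblock_carrier[of q r nu' z] by simp
    ultimately have "blk (Kbar q r nu' z j *\<^sub>v y) (q * (r - j) + l * r) r = blk (Dblock q r nu' z *\<^sub>v vec_last y (?n * r)) (l * r) r"
      using blk_append_right lr[OF l] by metis
    then show ?thesis using key by simp
  next
    case b
    have y': "y \<in> carrier_vec (0 + ?n * r)" using y b by simp
    have "Kbar q r nu' z j *\<^sub>v y = (0\<^sub>m q 0 *\<^sub>v vec_first y 0 + 0\<^sub>m q (?n * r) *\<^sub>v vec_last y (?n * r))
       @\<^sub>v (Dblock q r nu' z *\<^sub>v vec_last y (?n * r))"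
      unfolding Kbar_def using b four_block_C0[OF zero_carrier_mat zero_carrier_mat Dblock_carrier y'] by simp
    moreover have "dim_vec (0\<^sub>m q 0 *\<^sub>v vec_first y 0 + 0\<^sub>m q (?n * r) *\<^sub>v vec_last y (?n * r)) = q * (r - j)"
      using b by auto
    moreover have "dim_vec (Dblock q r nu' z *\<^sub>v vec_last y (?n * r)) = ?n * r"
      using Dblock_carrier[of q r nu' z] by simp
    ultimately have "blk (Kbar q r nu' z j *\<^sub>v y) (q * (r - j) + l * r) r = blk (Dblock q r nu' z *\<^sub>v vec_last y (?n * r)) (l * r) r"
      using blk_append_right lr[OF l] by metis
    then show ?thesis using key by simp
  next
    case c
    have e: "vec_last y (?n * r) = y" using y c by (auto simp: vec_last_def)
    show ?thesis using key c unfolding Kbar_def e by simp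
  qed
qed

lemma ks_le: "k < q \<Longrightarrow> k * s + s \<le> q * (s::nat)"
  by (metis add.commute mult_Suc mult_le_mono1 Suc_leI mult.commute)

lemma MT:
  assumes y: "y \<in> carrier_vec (q * (r - Suc j) + (nu' - q) * r)" and k: "k < q" and j: "j < r"
    and nq: "j + 2 \<le> r \<Longrightarrow> q < nu'"
  shows "vpoly (blk (Kbar q r nu' z j *\<^sub>v y) (k * (r - j)) (r - j)) =
    [:-z,1:] * vpoly (blk y (k * (r - Suc j)) (r - Suc j))
    - (if Suc k < q then vpoly (blk y (Suc k * (r - Suc j)) (r - Suc j)) else Gop z j (vpoly (blk y (q * (r - Suc j)) r)))"
proof -
  let ?n = "nu' - q" and ?s = "r - j" and ?s' = "r - Suc j"
  consider (a) "j + 2 \<le> r" | (b) "j + 1 = r" using j by linarith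
  then show ?thesis
  proof cases
    case a
    define y1 where "y1 = vec_first y (q * ?s')"
    define y2 where "y2 = vec_last y (?n * r)"
    have y1c: "y1 \<in> carrier_vec (q * ?s')" and y2c: "y2 \<in> carrier_vec (?n * r)" by (auto simp: y1_def y2_def)
    define F0 where "F0 = mderiv 0 (Fpoly r j) z"
    define F1 where "F1 = mderiv 1 (Fpoly r j) z"
    define GG where "GG = (1 / fact j) \<cdot>\<^sub>m Gj0_deriv r j z"
    have F0c': "F0 \<in> carrier_mat ?s ?s'" unfolding F0_def by (rule F0c)
    have F1c': "F1 \<in> carrier_mat ?s ?s'" unfolding F1_def by (rule F1c)
    have GGc: "GG \<in> carrier_mat ?s r" unfolding GG_def by (rule Gj_carrier)
    have k1: "kron (1\<^sub>m q) F0 \<in> carrier_mat (q * ?s) (q * ?s')" by (rule kron_carrier[OF one_carrier_mat F0c'])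
    have k2: "kron (shift_mat q) F1 \<in> carrier_mat (q * ?s) (q * ?s')" by (rule kron_carrier[OF shift_mat_carrier F1c'])
    have k3: "kron (ellphi q nu') GG \<in> carrier_mat (q * ?s) (?n * r)" by (rule kron_carrier[OF ellphi_carrier GGc])
    have "Kbar q r nu' z j *\<^sub>v y = ((kron (1\<^sub>m q) F0 + kron (shift_mat q) F1) *\<^sub>v y1
       + (- kron (ellphi q nu') GG) *\<^sub>v y2) @\<^sub>v (Dblock q r nu' z *\<^sub>v y2)"
      unfolding Kbar_def F0_def F1_def GG_def y1_def y2_def
      using a four_block_C0[OF Fblock_carrier Bblock_carrier Dblock_carrier y] by simp
    also have "(kron (1\<^sub>m q) F0 + kron (shift_mat q) F1) *\<^sub>v y1 = kron (1\<^sub>m q) F0 *\<^sub>v y1 + kron (shift_mat q) F1 *\<^sub>v y1"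
      by (rule add_mult_distrib_mat_vec[OF k1 k2 y1c])
    also have "(- kron (ellphi q nu') GG) *\<^sub>v y2 = - (kron (ellphi q nu') GG *\<^sub>v y2)"
      using k3 y2c by (intro uminus_mult_mat_vec) auto
    finally have K: "Kbar q r nu' z j *\<^sub>v y = (kron (1\<^sub>m q) F0 *\<^sub>v y1 + kron (shift_mat q) F1 *\<^sub>v y1
       + - (kron (ellphi q nu') GG *\<^sub>v y2)) @\<^sub>v (Dblock q r nu' z *\<^sub>v y2)" .
    have le: "k * ?s + ?s \<le> q * ?s" using ks_le[OF k] .
    have d1: "kron (1\<^sub>m q) F0 *\<^sub>v y1 \<in> carrier_vec (q * ?s)" by (rule mult_mat_vec_carrier[OF k1 y1c])
    have d2: "kron (shift_mat q) F1 *\<^sub>v y1 \<in> carrier_vec (q * ?s)" by (rule mult_mat_vec_carrier[OF k2 y1c])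
    have d3: "kron (ellphi q nu') GG *\<^sub>v y2 \<in> carrier_vec (q * ?s)" by (rule mult_mat_vec_carrier[OF k3 y2c])
    have "blk (Kbar q r nu' z j *\<^sub>v y) (k * ?s) ?s =
       blk (kron (1\<^sub>m q) F0 *\<^sub>v y1) (k * ?s) ?s + blk (kron (shift_mat q) F1 *\<^sub>v y1) (k * ?s) ?s
       + - blk (kron (ellphi q nu') GG *\<^sub>v y2) (k * ?s) ?s"
    proof (intro eq_vecI)
      fix i assume "i < dim_vec (blk (kron (1\<^sub>m q) F0 *\<^sub>v y1) (k * ?s) ?s + blk (kron (shift_mat q) F1 *\<^sub>v y1) (k * ?s) ?s
       + - blk (kron (ellphi q nu') GG *\<^sub>v y2) (k * ?s) ?s)"
      then have i: "i < ?s" by simp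
      then have ki: "k * ?s + i < q * ?s" using le by linarith
      show "blk (Kbar q r nu' z j *\<^sub>v y) (k * ?s) ?s $ i = (blk (kron (1\<^sub>m q) F0 *\<^sub>v y1) (k * ?s) ?s + blk (kron (shift_mat q) F1 *\<^sub>v y1) (k * ?s) ?s
       + - blk (kron (ellphi q nu') GG *\<^sub>v y2) (k * ?s) ?s) $ i"
        unfolding K using i ki carrier_vecD[OF d1] carrier_vecD[OF d2] carrier_vecD[OF d3]
        by (simp add: blk_def index_append_vec)
    qed simp
    then have "vpoly (blk (Kbar q r nu' z j *\<^sub>v y) (k * ?s) ?s) =
       vpoly (blk (kron (1\<^sub>m q) F0 *\<^sub>v y1) (k * ?s) ?s) + vpoly (blk (kron (shift_mat q) F1 *\<^sub>v y1) (k * ?s) ?s)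
       - vpoly (blk (kron (ellphi q nu') GG *\<^sub>v y2) (k * ?s) ?s)"
      by (simp add: vpoly_add vpoly_minus)
    also have "vpoly (blk (kron (1\<^sub>m q) F0 *\<^sub>v y1) (k * ?s) ?s) = [:-z,1:] * vpoly (blk y (k * ?s') ?s')"
    proof -
      have "vpoly (blk (kron (1\<^sub>m q) F0 *\<^sub>v y1) (k * ?s) ?s) = vpoly (F0 *\<^sub>v blk y1 (k * ?s') ?s')"
        by (rule kron_one_blk[OF F0c' y1c k])
      also have "\<dots> = [:-z,1:] * vpoly (blk y1 (k * ?s') ?s')"
        unfolding F0_def by (rule F0_vpoly[OF j]) (simp add: blk_carrier)
      also have "blk y1 (k * ?s') ?s' = blk y (k * ?s') ?s'"
        unfolding y1_def by (rule blk_vec_first[OF ks_le[OF k]])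
      finally show ?thesis .
    qed
    also have "vpoly (blk (kron (shift_mat q) F1 *\<^sub>v y1) (k * ?s) ?s) =
       (if Suc k < q then - vpoly (blk y (Suc k * ?s') ?s') else 0)"
    proof -
      have "vpoly (blk (kron (shift_mat q) F1 *\<^sub>v y1) (k * ?s) ?s) = (if Suc k < q then vpoly (F1 *\<^sub>v blk y1 (Suc k * ?s') ?s') else 0)"
        by (rule kron_shift_blk[OF F1c' y1c k])
      also have "\<dots> = (if Suc k < q then - vpoly (blk y (Suc k * ?s') ?s') else 0)"
      proof (cases "Suc k < q")
        case True
        have eqb: "blk y1 (Suc k * ?s') ?s' = blk y (Suc k * ?s') ?s'"
          unfolding y1_def by (rule blk_vec_first[OF ks_le[OF True]])
        have "vpoly (F1 *\<^sub>v blk y (Suc k * ?s') ?s') = - vpoly (blk y (Suc k * ?s') ?s')"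
          unfolding F1_def by (rule F1_vpoly[OF j]) (simp add: blk_carrier)
        then show ?thesis using True eqb by simp
      qed simp
      finally show ?thesis .
    qed
    also have "vpoly (blk (kron (ellphi q nu') GG *\<^sub>v y2) (k * ?s) ?s) =
       (if Suc k = q then Gop z j (vpoly (blk y (q * ?s') r)) else 0)"
    proof -
      have "vpoly (blk (kron (ellphi q nu') GG *\<^sub>v y2) (k * ?s) ?s) = (if Suc k = q then vpoly (GG *\<^sub>v blk y2 0 r) else 0)"
        by (rule kron_ellphi_blk[OF GGc y2c k nq[OF a]])
      also have "\<dots> = (if Suc k = q then Gop z j (vpoly (blk y (q * ?s') r)) else 0)"
      proof (cases "Suc k = q")
        case True
        have eqb: "blk y2 0 r = blk y (q * ?s' + 0) r"
          unfolding y2_def by (rule blk_vec_last[OF y]) (use nq[OF a] in \<open>auto\<close>)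
        have "vpoly (GG *\<^sub>v blk y2 0 r) = Gop z j (vpoly (blk y2 0 r))"
          unfolding GG_def by (rule Gj_vpoly[OF _ j]) (simp add: blk_carrier)
        then show ?thesis using True eqb by simp
      qed simp
      finally show ?thesis .
    qed
    finally show ?thesis using k by auto
  next
    case b
    have y': "y \<in> carrier_vec (0 + ?n * r)" using y b by simp
    have "Kbar q r nu' z j *\<^sub>v y = (0\<^sub>m q 0 *\<^sub>v vec_first y 0 + 0\<^sub>m q (?n * r) *\<^sub>v vec_last y (?n * r))
       @\<^sub>v (Dblock q r nu' z *\<^sub>v vec_last y (?n * r))"
      unfolding Kbar_def using b four_block_C0[OF zero_carrier_mat zero_carrier_mat Dblock_carrier y'] by simp
    moreover have "0\<^sub>m q 0 *\<^sub>v vec_first y 0 + 0\<^sub>m q (?n * r) *\<^sub>v vec_last y (?n * r) = 0\<^sub>v q"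
      by (rule eq_vecI) (auto simp: scalar_prod_def)
    ultimately have "blk (Kbar q r nu' z j *\<^sub>v y) (k * ?s) ?s = blk (0\<^sub>v q) (k * ?s) ?s"
      using b k by (simp add: blk_append_left Suc_diff_Suc[symmetric] diff_Suc_1[symmetric])
    also have "\<dots> = 0\<^sub>v ?s" using b k by (intro eq_vecI) auto
    finally have L: "vpoly (blk (Kbar q r nu' z j *\<^sub>v y) (k * ?s) ?s) = 0" by simp
    have "degree (vpoly (blk y (q * ?s') r)) < r" using j by (intro degree_vpoly_less[of "blk y (q * ?s') r", simplified]) simp
    then have "Gop z j (vpoly (blk y (q * ?s') r)) = 0" using b by (intro Gop_zero_high) simp
    moreover have "?s' = 0" using b by simp
    ultimately show ?thesis using L by (simp add: vpoly_empty)
  qed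
qed

lemma KL_poly:
  fixes U U' :: "nat \<Rightarrow> complex poly"
  assumes K: "0 < K" and a: "a < q" and qK: "q \<le> K" and UK: "U' K = 0"
    and rel: "\<forall>k<K. \<exists>e. U k = [:-z,1:] * U' k - U' (Suc k) + [:e:] \<and> (k < q \<longrightarrow> e = 0)"
  shows "(\<Sum>k<K. Polynomial.smult (1 / fact k) ((pderiv ^^ k) ([:0,1:] ^ a * U k))) =
    [:-z,1:] * (\<Sum>k<K. Polynomial.smult (1 / fact k) ((pderiv ^^ k) ([:0,1:] ^ a * U' k)))"
proof -
  from rel obtain e where e: "\<And>k. k < K \<Longrightarrow> U k = [:-z,1:] * U' k - U' (Suc k) + [:e k:] \<and> (k < q \<longrightarrow> e k = 0)"
    by metis
  let ?p = "[:0,1:] ^ a :: complex poly"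
  have split: "(\<Sum>k<K. Polynomial.smult (1 / fact k) ((pderiv ^^ k) (?p * U k))) =
     (\<Sum>k<K. Polynomial.smult (1 / fact k) ((pderiv ^^ k) (?p * ([:-z,1:] * U' k - U' (Suc k)))))
     + (\<Sum>k<K. Polynomial.smult (1 / fact k) ((pderiv ^^ k) (?p * [:e k:])))"
  proof -
    have "(\<Sum>k<K. Polynomial.smult (1 / fact k) ((pderiv ^^ k) (?p * U k))) =
     (\<Sum>k<K. Polynomial.smult (1 / fact k) ((pderiv ^^ k) (?p * ([:-z,1:] * U' k - U' (Suc k))))
       + Polynomial.smult (1 / fact k) ((pderiv ^^ k) (?p * [:e k:])))"
    proof (rule sum.cong[OF refl])
      fix k assume "k \<in> {..<K}"
      then have "U k = ([:-z,1:] * U' k - U' (Suc k)) + [:e k:]" using e by simp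
      then show "Polynomial.smult (1 / fact k) ((pderiv ^^ k) (?p * U k)) =
        Polynomial.smult (1 / fact k) ((pderiv ^^ k) (?p * ([:-z,1:] * U' k - U' (Suc k))))
       + Polynomial.smult (1 / fact k) ((pderiv ^^ k) (?p * [:e k:]))"
        by (simp only: distrib_left higher_pderiv_add smult_add_right)
    qed
    then show ?thesis by (simp only: sum.distrib)
  qed
  have z: "(\<Sum>k<K. Polynomial.smult (1 / fact k) ((pderiv ^^ k) (?p * [:e k:]))) = 0"
  proof (intro sum.neutral ballI)
    fix k assume "k \<in> {..<K}"
    then have k: "k < K" by simp
    show "Polynomial.smult (1 / fact k) ((pderiv ^^ k) (?p * [:e k:])) = 0"
    proof (cases "k < q")
      case True then show ?thesis using e[OF k] by simp
    next
      case False
      have "degree (?p * [:e k:]) \<le> degree ?p + degree [:e k:]" by (rule degree_mult_le)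
      moreover have "degree ?p \<le> a" using degree_power_le[of "[:0,1:]" a] by simp
      ultimately have "degree (?p * [:e k:]) \<le> a" by simp
      then have "degree (?p * [:e k:]) < k" using False a by linarith
      then show ?thesis by (simp add: hpderiv_deg_zero)
    qed
  qed
  obtain K' where K': "K = Suc K'" using K by (cases K) auto
  have t: "(\<Sum>k<K. Polynomial.smult (1 / fact k) ((pderiv ^^ k) (?p * ([:-z,1:] * U' k - U' (Suc k))))) =
    [:-z,1:] * (\<Sum>k<K. Polynomial.smult (1 / fact k) ((pderiv ^^ k) (?p * U' k)))"
    using telescope[of ?p z U' K'] UK K' by simp
  show ?thesis using split z t by simp
qed

definition Uk :: "complex \<Rightarrow> nat \<Rightarrow> nat \<Rightarrow> nat \<Rightarrow> complex vec \<Rightarrow> nat \<Rightarrow> complex poly" where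
  "Uk z q r j y k = (if k < q then vpoly (blk y (k * (r - j)) (r - j))
     else if k < q + (r - 1) then Hop z j (vpoly (blk y (q * (r - j) + (k - q) * r) r)) else 0)"

definition Psi :: "complex \<Rightarrow> nat \<Rightarrow> nat \<Rightarrow> nat \<Rightarrow> complex vec \<Rightarrow> nat \<Rightarrow> complex poly" where
  "Psi z q r j y a = (\<Sum>k<q + (r - 1). Polynomial.smult (1 / fact k) ((pderiv ^^ k) ([:0,1:] ^ a * Uk z q r j y k)))"

lemma Psi_high: assumes "r \<le> j" "0 < r" shows "Psi z q r j y a = 0"
proof -
  have "Uk z q r j y k = 0" for k
  proof -
    have "Hop z j (vpoly (blk y (q * (r - j) + (k - q) * r) r)) = 0"
      using degree_vpoly_less[of "blk y (q * (r - j) + (k - q) * r) r"] assms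
      by (intro Hop_zero_high) auto
    then show ?thesis using assms by (simp add: Uk_def vpoly_empty)
  qed
  then show ?thesis by (simp add: Psi_def)
qed

lemma KL:
  assumes q: "0 < q" and r: "0 < r" and a: "a < q" and y: "y \<in> carrier_vec (q * (r - Suc j) + (r - 1) * r)"
  shows "Psi z q r j (Kbar q r (q + r - 1) z j *\<^sub>v y) a = [:-z,1:] * Psi z q r (Suc j) y a"
proof (cases "j < r")
  case False
  then show ?thesis using r by (simp add: Psi_high)
next
  case True
  let ?nu = "q + r - 1" and ?K = "q + (r - 1)" and ?s = "r - j" and ?s' = "r - Suc j"
  let ?x = "Kbar q r ?nu z j *\<^sub>v y"
  have nq: "?nu - q = r - 1" using r by simp
  have y': "y \<in> carrier_vec (q * (r - Suc j) + (?nu - q) * r)" using y nq by simp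
  define V' where "V' l = vpoly (blk y (q * ?s' + l * r) r)" for l
  have rel: "\<forall>k<?K. \<exists>e. Uk z q r j ?x k = [:-z,1:] * Uk z q r (Suc j) y k - Uk z q r (Suc j) y (Suc k) + [:e:] \<and> (k < q \<longrightarrow> e = 0)"
  proof (intro allI impI)
    fix k assume kK: "k < ?K"
    show "\<exists>e. Uk z q r j ?x k = [:-z,1:] * Uk z q r (Suc j) y k - Uk z q r (Suc j) y (Suc k) + [:e:] \<and> (k < q \<longrightarrow> e = 0)"
    proof (cases "k < q")
      case True
      have mt: "Uk z q r j ?x k = [:-z,1:] * vpoly (blk y (k * ?s') ?s')
        - (if Suc k < q then vpoly (blk y (Suc k * ?s') ?s') else Gop z j (vpoly (blk y (q * ?s') r)))"
      proof -
        have nqq: "j + 2 \<le> r \<Longrightarrow> q < q + r - 1" by simp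
        have u0: "Uk z q r j ?x k = vpoly (blk ?x (k * ?s) ?s)" using True unfolding Uk_def by simp
        show ?thesis unfolding u0 by (rule MT[OF y' True \<open>j < r\<close> nqq])
      qed
      have u1: "Uk z q r (Suc j) y k = vpoly (blk y (k * ?s') ?s')" using True by (simp add: Uk_def)
      have u2: "Uk z q r (Suc j) y (Suc k) = (if Suc k < q then vpoly (blk y (Suc k * ?s') ?s') else Gop z j (vpoly (blk y (q * ?s') r)))"
      proof (cases "Suc k < q")
        case True then show ?thesis by (simp add: Uk_def)
      next
        case False
        then have sk: "Suc k = q" using \<open>k < q\<close> by simp
        show ?thesis
        proof (cases "1 < r")
          case True
          then show ?thesis using sk by (simp add: Uk_def Hop_def)
        next
          case False
          then have r1: "r = 1" using r by simp
          have "Gop z j (vpoly (blk y (q * ?s') r)) = 0"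
            using degree_vpoly_less[of "blk y (q * ?s') r"] r1 by (intro Gop_zero_high) simp
          then show ?thesis using sk r1 by (simp add: Uk_def)
        qed
      qed
      show ?thesis by (rule exI[of _ 0], unfold mt u1 u2) simp
    next
      case False
      then obtain l where kl: "k = q + l" by (metis le_add_diff_inverse not_less)
      have l: "l < r - 1" using kK kl by simp
      have mb: "vpoly (blk ?x (q * ?s + l * r) r) = V' l - (if Suc l < r - 1 then Gop z 0 (V' (Suc l)) else 0)"
      proof -
        have lq: "l < ?nu - q" using l nq by simp
        show ?thesis using MB[OF y' lq r, of z] nq by (simp add: V'_def)
      qed
      have "Uk z q r j ?x k = Hop z j (vpoly (blk ?x (q * ?s + l * r) r))"
        using kl l by (simp add: Uk_def)
      also have "\<dots> = Hop z j (V' l) - (if Suc l < r - 1 then Hop z (Suc j) (V' (Suc l)) else 0)"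
        unfolding mb by (simp add: Hop_diff R2)
      finally have U: "Uk z q r j ?x k = Hop z j (V' l) - (if Suc l < r - 1 then Hop z (Suc j) (V' (Suc l)) else 0)" .
      obtain \<kappa> where kap: "Hop z j (V' l) = [:-z,1:] * Hop z (Suc j) (V' l) + [:\<kappa>:]" using R1 by blast
      have u1: "Uk z q r (Suc j) y k = Hop z (Suc j) (V' l)" using kl l by (simp add: Uk_def V'_def)
      have u2: "Uk z q r (Suc j) y (Suc k) = (if Suc l < r - 1 then Hop z (Suc j) (V' (Suc l)) else 0)"
        using kl l r by (auto simp: Uk_def V'_def)
      show ?thesis
        by (rule exI[of _ \<kappa>], unfold U kap u1 u2) (use False in simp)
    qed
  qed
  have "Psi z q r j ?x a = [:-z,1:] * Psi z q r (Suc j) y a"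
    unfolding Psi_def
    by (rule KL_poly[OF _ a _ _ rel]) (use q in \<open>auto simp: Uk_def\<close>)
  then show ?thesis .
qed

lemma Kprod_carrier: "Kprod q r nu' z m \<in> carrier_mat (q * r + (nu' - q) * r) (q * (r - Suc m) + (nu' - q) * r)"
proof (induction m)
  case 0 then show ?case using Kbar_carrier[of q r nu' z 0] by simp
next
  case (Suc m)
  then show ?case using Kbar_carrier[of q r nu' z "Suc m"] by (simp add: mult_carrier_mat)
qed

lemma chain:
  assumes q: "0 < q" and r: "0 < r" and a: "a < q" and y: "y \<in> carrier_vec (q * (r - Suc m) + (r - 1) * r)"
  shows "Psi z q r 0 (Kprod q r (q + r - 1) z m *\<^sub>v y) a = [:-z,1:] ^ Suc m * Psi z q r (Suc m) y a"
  using y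
proof (induction m arbitrary: y)
  case 0
  then show ?case using KL[OF q r a, of y 0 z] by simp
next
  case (Suc m)
  let ?nu = "q + r - 1"
  have nq: "?nu - q = r - 1" using r by simp
  have Kc: "Kprod q r ?nu z m \<in> carrier_mat (q * r + (r - 1) * r) (q * (r - Suc m) + (r - 1) * r)"
    using Kprod_carrier[of q r ?nu z m] nq by simp
  have Bc: "Kbar q r ?nu z (Suc m) \<in> carrier_mat (q * (r - Suc m) + (r - 1) * r) (q * (r - Suc (Suc m)) + (r - 1) * r)"
    using Kbar_carrier[of q r ?nu z "Suc m"] nq by simp
  have yb: "Kbar q r ?nu z (Suc m) *\<^sub>v y \<in> carrier_vec (q * (r - Suc m) + (r - 1) * r)"
    using Bc Suc.prems by simp
  have "Kprod q r ?nu z (Suc m) *\<^sub>v y = Kprod q r ?nu z m *\<^sub>v (Kbar q r ?nu z (Suc m) *\<^sub>v y)"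
    using assoc_mult_mat_vec[OF Kc Bc Suc.prems] by simp
  then have "Psi z q r 0 (Kprod q r ?nu z (Suc m) *\<^sub>v y) a = [:-z,1:] ^ Suc m * Psi z q r (Suc m) (Kbar q r ?nu z (Suc m) *\<^sub>v y) a"
    using Suc.IH[OF yb] by simp
  also have "\<dots> = [:-z,1:] ^ Suc (Suc m) * Psi z q r (Suc (Suc m)) y a"
  proof -
    have "Psi z q r (Suc m) (Kbar q r ?nu z (Suc m) *\<^sub>v y) a = [:-z,1:] * Psi z q r (Suc (Suc m)) y a"
      by (rule KL[OF q r a Suc.prems])
    then show ?thesis by (simp only: power_Suc2 mult.assoc)
  qed
  finally show ?case .
qed

lemma Mpoly_entry: "a < q \<Longrightarrow> b < r \<Longrightarrow> mderiv k (Mpoly q r) z $$ (a,b) = poly ((pderiv ^^ k) ([:0,1:] ^ (a + b))) z"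
  by (simp add: mderiv_def Mpoly_def upoly_def wpoly_def scalar_prod_def power_add)

definition PsiN :: "complex \<Rightarrow> nat \<Rightarrow> nat \<Rightarrow> complex vec \<Rightarrow> nat \<Rightarrow> complex poly" where
  "PsiN z r nu x a = (\<Sum>k<nu. Polynomial.smult (1 / fact k) ((pderiv ^^ k) ([:0,1:] ^ a * vpoly (blk x (k * r) r))))"

lemma vpoly_blk_expand: "vpoly (blk x st s) = (\<Sum>b<s. Polynomial.smult (x $ (st + b)) ([:0,1:] ^ b))"
  unfolding vpoly_def by (simp add: monom_altdef)

lemma PsiN_expand: "PsiN z r nu x a = (\<Sum>k<nu. \<Sum>b<r. Polynomial.smult (x $ (k * r + b) / fact k) ((pderiv ^^ k) ([:0,1:] ^ (a + b))))"
  unfolding PsiN_def vpoly_blk_expand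
  by (simp add: sum_distrib_left higher_pderiv_sum higher_pderiv_smult smult_sum_r power_add mult.commute mult_smult_right)

lemma hp_add: "(pderiv ^^ i) ((pderiv ^^ k) p) = (pderiv ^^ (k + i)) p"
  by (metis funpow_add comp_apply add.commute)

lemma poly_sum_c: "poly (sum f A) z = (\<Sum>x\<in>A. poly (f x) (z::complex))"
  by (induction A rule: infinite_finite_induct) auto

lemma Nrow:
  assumes x: "x \<in> carrier_vec (nu * r)" and i: "i < mu" and a: "a < q"
  shows "(Nmat q r mu nu z *\<^sub>v x) $ (i * q + a) = poly ((pderiv ^^ i) (PsiN z r nu x a)) z / fact i"
proof -
  have iq: "i * q + a < mu * q"
  proof -
    have "i * q + a < Suc i * q" using a by simp
    also have "\<dots> \<le> mu * q" using i by (intro mult_le_mono1) simp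
    finally show ?thesis .
  qed
  have dq: "(i * q + a) div q = i" "(i * q + a) mod q = a" using a by auto
  have "(Nmat q r mu nu z *\<^sub>v x) $ (i * q + a) = (\<Sum>c<nu * r. Nmat q r mu nu z $$ (i * q + a, c) * x $ c)"
    using x iq by (subst mv_entry) (auto simp: Nmat_def)
  also have "\<dots> = (\<Sum>k<nu. \<Sum>b<r. Nmat q r mu nu z $$ (i * q + a, k * r + b) * x $ (k * r + b))"
    by (rule sum_blocks)
  also have "\<dots> = (\<Sum>k<nu. \<Sum>b<r. x $ (k * r + b) / fact k * poly ((pderiv ^^ (i + k)) ([:0,1:] ^ (a + b))) z / fact i)"
  proof (intro sum.cong refl)
    fix k b assume k: "k \<in> {..<nu}" and b: "b \<in> {..<r}"
    have kb: "k * r + b < nu * r"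
    proof -
      have "k * r + b < Suc k * r" using b by simp
      also have "\<dots> \<le> nu * r" using k by (intro mult_le_mono1) simp
      finally show ?thesis .
    qed
    have dr: "(k * r + b) div r = k" "(k * r + b) mod r = b" using b by auto
    show "Nmat q r mu nu z $$ (i * q + a, k * r + b) * x $ (k * r + b) = x $ (k * r + b) / fact k * poly ((pderiv ^^ (i + k)) ([:0,1:] ^ (a + b))) z / fact i"
      using iq kb dr dq a b by (simp add: Nmat_def Mpoly_entry mult.commute)
  qed
  also have "\<dots> = poly ((pderiv ^^ i) (PsiN z r nu x a)) z / fact i"
    unfolding PsiN_expand
    by (simp add: higher_pderiv_sum higher_pderiv_smult poly_sum_c sum_divide_distrib hp_add add.commute)
  finally show ?thesis .
qed

lemma Nmat_carrier: "Nmat q r mu nu z \<in> carrier_mat (mu * q) (nu * r)"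
  by (simp add: Nmat_def)

lemma Nzero_iff:
  assumes x: "x \<in> carrier_vec (nu * r)" and q: "0 < q"
  shows "Nmat q r mu nu z *\<^sub>v x = 0\<^sub>v (mu * q) \<longleftrightarrow> (\<forall>a<q. [:-z,1:] ^ mu dvd PsiN z r nu x a)"
proof
  assume N: "Nmat q r mu nu z *\<^sub>v x = 0\<^sub>v (mu * q)"
  show "\<forall>a<q. [:-z,1:] ^ mu dvd PsiN z r nu x a"
  proof (intro allI impI)
    fix a assume a: "a < q"
    have "poly ((pderiv ^^ i) (PsiN z r nu x a)) z = 0" if i: "i < mu" for i
    proof -
      have iq: "i * q + a < mu * q"
      proof -
        have "i * q + a < Suc i * q" using a by simp
        also have "\<dots> \<le> mu * q" using i by (intro mult_le_mono1) simp
        finally show ?thesis .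
      qed
      have "poly ((pderiv ^^ i) (PsiN z r nu x a)) z / fact i = 0"
        using Nrow[OF x i a, of z] N iq by simp
      then show ?thesis by simp
    qed
    then show "[:-z,1:] ^ mu dvd PsiN z r nu x a" using taylor_zero_iff_dvd by blast
  qed
next
  assume D: "\<forall>a<q. [:-z,1:] ^ mu dvd PsiN z r nu x a"
  show "Nmat q r mu nu z *\<^sub>v x = 0\<^sub>v (mu * q)"
  proof (rule eq_vecI)
    fix i' assume "i' < dim_vec (0\<^sub>v (mu * q))"
    then have i': "i' < mu * q" by simp
    define i where "i = i' div q"
    define a where "a = i' mod q"
    have a: "a < q" using q by (simp add: a_def)
    have i: "i < mu" using i' q by (simp add: i_def less_mult_imp_div_less)
    have e: "i' = i * q + a" by (simp add: i_def a_def)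
    have "poly ((pderiv ^^ i) (PsiN z r nu x a)) z = 0"
      using D a i taylor_zero_iff_dvd by blast
    then show "(Nmat q r mu nu z *\<^sub>v x) $ i' = 0\<^sub>v (mu * q) $ i'"
      unfolding e using Nrow[OF x i a, of z] i' e by simp
  qed (simp add: Nmat_def)
qed

lemma lin_ext:
  fixes P :: "nat \<Rightarrow> complex poly" and c :: "nat \<Rightarrow> complex"
  assumes dp: "degree p < q"
    and D: "\<forall>a<q. d dvd (\<Sum>k<K. Polynomial.smult (c k) ((pderiv ^^ k) ([:0,1:] ^ a * P k)))"
  shows "d dvd (\<Sum>k<K. Polynomial.smult (c k) ((pderiv ^^ k) (p * P k)))"
proof -
  have q: "0 < q" using dp by simp
  have "p = (\<Sum>a\<le>q - 1. monom (coeff p a) a)"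
    using dp by (intro poly_as_sum_of_monoms'[symmetric]) simp
  also have "{..q - 1} = {..<q}" using q by auto
  finally have p: "p = (\<Sum>a<q. Polynomial.smult (coeff p a) ([:0,1:] ^ a))" by (simp add: monom_altdef)
  have pk: "p * P k = (\<Sum>a<q. Polynomial.smult (coeff p a) ([:0,1:] ^ a * P k))" for k
    by (subst p) (simp add: sum_distrib_right)
  have "(\<Sum>k<K. Polynomial.smult (c k) ((pderiv ^^ k) (p * P k))) =
    (\<Sum>k<K. \<Sum>a<q. Polynomial.smult (c k) (Polynomial.smult (coeff p a) ((pderiv ^^ k) ([:0,1:] ^ a * P k))))"
    by (simp only: pk higher_pderiv_sum higher_pderiv_smult smult_sum_r)
  also have "\<dots> = (\<Sum>k<K. \<Sum>a<q. Polynomial.smult (coeff p a) (Polynomial.smult (c k) ((pderiv ^^ k) ([:0,1:] ^ a * P k))))"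
    by (simp only: smult_smult mult.commute)
  also have "\<dots> = (\<Sum>a<q. Polynomial.smult (coeff p a) (\<Sum>k<K. Polynomial.smult (c k) ((pderiv ^^ k) ([:0,1:] ^ a * P k))))"
    by (subst sum.swap) (simp only: smult_sum_r)
  finally have e: "(\<Sum>k<K. Polynomial.smult (c k) ((pderiv ^^ k) (p * P k))) =
    (\<Sum>a<q. Polynomial.smult (coeff p a) (\<Sum>k<K. Polynomial.smult (c k) ((pderiv ^^ k) ([:0,1:] ^ a * P k))))" .
  show ?thesis unfolding e
    apply (rule dvd_sum)
    apply (rule dvd_smult)
    using D by auto
qed

lemma supp_inj:
  assumes x: "x \<in> carrier_vec (nu * r)" and qnu: "q \<le> nu" and q: "0 < q" and mu: "0 < mu" and r: "0 < r"
    and mm: "mm \<le> mu" "0 < mm" "mm \<le> r"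
    and supp: "\<forall>i<nu * r. (q \<le> i div r \<or> mm \<le> i mod r) \<longrightarrow> x $ i = 0"
    and N: "Nmat q r mu nu z *\<^sub>v x = 0\<^sub>v (mu * q)"
  shows "x = 0\<^sub>v (nu * r)"
proof -
  define P where "P k = vpoly (blk x (k * r) r)" for k
  have idx: "k * r + b < nu * r" if "k < nu" "b < r" for k b
  proof -
    have "k * r + b < Suc k * r" using that by simp
    also have "\<dots> \<le> nu * r" using that by (intro mult_le_mono1) simp
    finally show ?thesis .
  qed
  have Pz: "P k = 0" if "q \<le> k" "k < nu" for k
  proof (rule poly_eqI)
    fix b show "coeff (P k) b = coeff 0 b"
      using supp idx[OF that(2)] that by (cases "b < r") (auto simp: P_def coeff_vpoly_blk)
  qed
  have Ps: "PsiN z r nu x a = (\<Sum>k<q. Polynomial.smult (1 / fact k) ((pderiv ^^ k) ([:0,1:] ^ a * P k)))" for a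
  proof -
    have "PsiN z r nu x a = (\<Sum>k\<in>{..<q} \<union> {q..<nu}. Polynomial.smult (1 / fact k) ((pderiv ^^ k) ([:0,1:] ^ a * P k)))"
      unfolding PsiN_def P_def using qnu by (intro sum.cong) auto
    also have "\<dots> = (\<Sum>k<q. Polynomial.smult (1 / fact k) ((pderiv ^^ k) ([:0,1:] ^ a * P k)))
       + (\<Sum>k\<in>{q..<nu}. Polynomial.smult (1 / fact k) ((pderiv ^^ k) ([:0,1:] ^ a * P k)))"
      by (rule sum.union_disjoint) auto
    also have "(\<Sum>k\<in>{q..<nu}. Polynomial.smult (1 / fact k) ((pderiv ^^ k) ([:0,1:] ^ a * P k))) = 0"
      by (intro sum.neutral) (auto simp: Pz)
    finally show ?thesis by simp
  qed
  have D: "\<forall>a<q. [:-z,1:] ^ mu dvd (\<Sum>k<q. Polynomial.smult (1 / fact k) ((pderiv ^^ k) ([:0,1:] ^ a * P k)))"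
    using Nzero_iff[OF x q, of mu z] N Ps by simp
  have H: "\<forall>p. degree p < q \<longrightarrow> [:-z,1:] ^ mu dvd (\<Sum>k<q. Polynomial.smult (1 / fact k) ((pderiv ^^ k) (p * P k)))"
    using lin_ext[OF _ D] by blast
  have deg: "\<forall>k<q. degree (P k) < mu"
  proof (intro allI impI)
    fix k assume k: "k < q"
    have "\<forall>b>mm - 1. coeff (P k) b = 0"
    proof (intro allI impI)
      fix b assume b: "mm - 1 < b"
      show "coeff (P k) b = 0"
      proof (cases "b < r")
        case True
        have "k * r + b < nu * r" using idx[of k b] k qnu True by simp
        moreover have "(k * r + b) mod r = b" using True by simp
        ultimately show ?thesis using supp b True by (auto simp: P_def coeff_vpoly_blk)
      qed (simp add: P_def coeff_vpoly_blk)
    qed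
    then have "degree (P k) \<le> mm - 1" by (rule degree_le)
    then show "degree (P k) < mu" using mm by linarith
  qed
  have Pq: "\<forall>k<q. P k = 0" by (rule inj_poly[OF deg H])
  show ?thesis
  proof (rule eq_vecI)
    fix i assume "i < dim_vec (0\<^sub>v (nu * r))"
    then have i: "i < nu * r" by simp
    define k where "k = i div r"
    define b where "b = i mod r"
    have e: "i = k * r + b" by (simp add: k_def b_def)
    have b: "b < r" using r by (simp add: b_def)
    show "x $ i = 0\<^sub>v (nu * r) $ i"
    proof (cases "k < q")
      case True
      have "coeff (P k) b = 0" using Pq True by simp
      then show ?thesis using b i unfolding e by (simp add: P_def coeff_vpoly_blk)
    next
      case False
      then show ?thesis using supp i by (simp add: k_def)
    qed
  qed (use x in simp)
qed

lemma blk_zero: "st + s \<le> n \<Longrightarrow> blk (0\<^sub>v n) st s = 0\<^sub>v s"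
  by (rule eq_vecI) auto

lemma xz_mult_zero: "[:-z,1:] * (T :: complex poly) = 0 \<Longrightarrow> T = 0"
proof -
  assume a: "[:-z,1:] * T = 0"
  have "[:-z,1:] \<noteq> (0::complex poly)" by simp
  with a show ?thesis by (simp only: mult_eq_0_iff) simp
qed

lemma Kbar_inj:
  assumes q: "0 < q" and r: "0 < r" and y: "y \<in> carrier_vec (q * (r - Suc j) + (r - 1) * r)"
    and K0: "Kbar q r (q + r - 1) z j *\<^sub>v y = 0\<^sub>v (q * (r - j) + (r - 1) * r)"
  shows "y = 0\<^sub>v (q * (r - Suc j) + (r - 1) * r)"
proof -
  let ?nu = "q + r - 1" and ?s = "r - j" and ?s' = "r - Suc j"
  have nq: "?nu - q = r - 1" using r by simp
  have y': "y \<in> carrier_vec (q * (r - Suc j) + (?nu - q) * r)" using y nq by simp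
  define V' where "V' l = vpoly (blk y (q * ?s' + l * r) r)" for l
  define T' where "T' k = vpoly (blk y (k * ?s') ?s')" for k
  have lr: "\<And>l. l < r - 1 \<Longrightarrow> l * r + r \<le> (r - 1) * r"
    by (metis add.commute mult_Suc mult_le_mono1 Suc_leI)
  have Vrec: "V' l = (if Suc l < r - 1 then Gop z 0 (V' (Suc l)) else 0)" if l: "l < r - 1" for l
  proof -
    have lq: "l < ?nu - q" using l nq by simp
    have "blk (Kbar q r ?nu z j *\<^sub>v y) (q * ?s + l * r) r = 0\<^sub>v r"
      unfolding K0 using lr[OF l] by (intro blk_zero) simp
    then have "vpoly (blk (Kbar q r ?nu z j *\<^sub>v y) (q * ?s + l * r) r) = 0" by simp
    then have "0 = V' l - (if Suc l < r - 1 then Gop z 0 (V' (Suc l)) else 0)"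
      using MB[OF y' lq r, of z] nq by (simp add: V'_def)
    then show ?thesis by (simp split: if_splits; metis right_minus_eq)
  qed
  have V0: "l < r - 1 \<longrightarrow> V' l = 0" for l
  proof (cases "l \<le> r - 1")
    case True
    show ?thesis
    proof (induction rule: inc_induct[OF True])
      case 1 then show ?case by simp
    next
      case (2 n)
      then show ?case using Vrec[of n] by auto
    qed
  qed simp
  have Tz: "\<forall>k<q. T' k = 0" if j: "j < r"
  proof -
    have G0: "Gop z j (vpoly (blk y (q * ?s') r)) = 0"
    proof (cases "0 < r - 1")
      case True
      then have "V' 0 = 0" using V0 by blast
      then show ?thesis by (simp add: V'_def)
    next
      case False
      then have "r = 1" using r by simp
      then show ?thesis using degree_vpoly_less[of "blk y (q * ?s') r"] by (intro Gop_zero_high) auto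
    qed
    have Trec: "[:-z,1:] * T' k = (if Suc k < q then T' (Suc k) else 0)" if k: "k < q" for k
    proof -
      have nqq: "j + 2 \<le> r \<Longrightarrow> q < ?nu" by simp
      have "blk (Kbar q r ?nu z j *\<^sub>v y) (k * ?s) ?s = 0\<^sub>v ?s"
        unfolding K0 using ks_le[OF k, of ?s] by (intro blk_zero) simp
      then have "vpoly (blk (Kbar q r ?nu z j *\<^sub>v y) (k * ?s) ?s) = 0" by simp
      then have "0 = [:-z,1:] * T' k - (if Suc k < q then T' (Suc k) else Gop z j (vpoly (blk y (q * ?s') r)))"
        using MT[OF y' k j nqq, of z] by (simp add: T'_def)
      then show ?thesis using G0 by (simp only: split: if_splits; metis right_minus_eq diff_zero)
    qed
    have "k < q \<longrightarrow> T' k = 0" for k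
    proof (cases "k \<le> q")
      case True
      show ?thesis
      proof (induction rule: inc_induct[OF True])
        case 1 then show ?case by simp
      next
        case (2 n)
        show ?case
        proof
          assume n: "n < q"
          have "[:-z,1:] * T' n = 0" unfolding Trec[OF n] using 2 by auto
          then show "T' n = 0" by (rule xz_mult_zero)
        qed
      qed
    qed simp
    then show ?thesis by blast
  qed
  show ?thesis
  proof (rule eq_vecI)
    fix i assume "i < dim_vec (0\<^sub>v (q * ?s' + (r - 1) * r))"
    then have i: "i < q * ?s' + (r - 1) * r" by simp
    show "y $ i = 0\<^sub>v (q * ?s' + (r - 1) * r) $ i"
    proof (cases "i < q * ?s'")
      case True
      then have s0: "0 < ?s'" by (cases "?s' = 0") auto
      then have j: "j < r" by simp
      define k where "k = i div ?s'"
      define b where "b = i mod ?s'"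
      have k: "k < q" using True s0 by (simp add: k_def less_mult_imp_div_less)
      have b: "b < ?s'" using s0 by (simp add: b_def)
      have e: "i = k * ?s' + b" unfolding k_def b_def by (rule div_mult_mod_eq[symmetric])
      have "coeff (T' k) b = 0" using Tz[OF j] k by simp
      then show ?thesis using b i unfolding e by (simp add: T'_def coeff_vpoly_blk)
    next
      case False
      define l where "l = (i - q * ?s') div r"
      define b where "b = (i - q * ?s') mod r"
      have l: "l < r - 1" using False i by (simp add: l_def less_mult_imp_div_less)
      have b: "b < r" using r by (simp add: b_def)
      have e: "i = q * ?s' + l * r + b" using False by (simp add: l_def b_def)
      have "coeff (V' l) b = 0" using V0 l by simp
      then show ?thesis using b i unfolding e by (simp add: V'_def coeff_vpoly_blk add.assoc)
    qed
  qed (use y in simp)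
qed

lemma Kprod_inj:
  assumes q: "0 < q" and r: "0 < r" and y: "y \<in> carrier_vec (q * (r - Suc m) + (r - 1) * r)"
    and K0: "Kprod q r (q + r - 1) z m *\<^sub>v y = 0\<^sub>v (q * r + (r - 1) * r)"
  shows "y = 0\<^sub>v (q * (r - Suc m) + (r - 1) * r)"
  using y K0
proof (induction m arbitrary: y)
  case 0
  then show ?case using Kbar_inj[OF q r, of y 0 z] by simp
next
  case (Suc m)
  let ?nu = "q + r - 1"
  have nq: "?nu - q = r - 1" using r by simp
  have Kc: "Kprod q r ?nu z m \<in> carrier_mat (q * r + (r - 1) * r) (q * (r - Suc m) + (r - 1) * r)"
    using Kprod_carrier[of q r ?nu z m] nq by simp
  have Bc: "Kbar q r ?nu z (Suc m) \<in> carrier_mat (q * (r - Suc m) + (r - 1) * r) (q * (r - Suc (Suc m)) + (r - 1) * r)"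
    using Kbar_carrier[of q r ?nu z "Suc m"] nq by simp
  have yb: "Kbar q r ?nu z (Suc m) *\<^sub>v y \<in> carrier_vec (q * (r - Suc m) + (r - 1) * r)"
    using Bc Suc.prems by simp
  have "Kprod q r ?nu z m *\<^sub>v (Kbar q r ?nu z (Suc m) *\<^sub>v y) = 0\<^sub>v (q * r + (r - 1) * r)"
    using assoc_mult_mat_vec[OF Kc Bc Suc.prems(1)] Suc.prems(2) by simp
  then have "Kbar q r ?nu z (Suc m) *\<^sub>v y = 0\<^sub>v (q * (r - Suc m) + (r - 1) * r)"
    using Suc.IH[OF yb] by simp
  then show ?case using Kbar_inj[OF q r Suc.prems(1)] by simp
qed

lemma arith1:
  assumes r: "0 < r" and nu: "q + r \<le> nu"
  shows "q * r + (r - 1) * r + r * (nu - q - r + 1) = nu * (r::nat)"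
proof -
  obtain t where t: "nu = q + r + t" using nu le_Suc_ex by blast
  obtain r' where r': "r = Suc r'" using r by (cases r) auto
  show ?thesis unfolding t r' by (simp add: algebra_simps)
qed

lemma arith2:
  assumes r: "0 < r" and nu: "q + r \<le> nu"
  shows "q * (r - mu) + (r - 1) * r + r * (nu - q - r + 1) + q * min mu r = nu * (r::nat)"
proof -
  have "q * (r - mu) + q * min mu r = q * r"
    by (cases "mu < r") (auto simp: diff_mult_distrib2 min_def)
  then show ?thesis using arith1[OF r nu] by linarith
qed

lemma arith3:
  assumes r: "0 < r" and nu: "q + r \<le> nu"
  shows "(if mu < r then nu * r - mu * q else (nu - q) * r) = nu * r - q * min mu (r::nat)"
proof (cases "mu < r")
  case True then show ?thesis by (simp add: min_def mult.commute)
next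
  case False then show ?thesis by (simp add: min_def diff_mult_distrib)
qed

lemma append_zero:
  assumes u: "u \<in> carrier_vec n1" and w: "w \<in> carrier_vec n2" and z: "u @\<^sub>v w = 0\<^sub>v (n1 + n2)"
  shows "u = 0\<^sub>v n1" "w = 0\<^sub>v n2"
proof -
  show "u = 0\<^sub>v n1"
  proof (rule eq_vecI)
    fix i assume "i < dim_vec (0\<^sub>v n1)"
    then have i: "i < n1" by simp
    have "(u @\<^sub>v w) $ i = 0" using z i by simp
    then show "u $ i = 0\<^sub>v n1 $ i" using u w i by simp
  qed (use u in simp)
  show "w = 0\<^sub>v n2"
  proof (rule eq_vecI)
    fix i assume "i < dim_vec (0\<^sub>v n2)"
    then have i: "i < n2" by simp
    have "(u @\<^sub>v w) $ (n1 + i) = 0" using z i by simp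
    then show "w $ i = 0\<^sub>v n2 $ i" using u w i by simp
  qed (use w in simp)
qed

definition Emat :: "nat \<Rightarrow> nat \<Rightarrow> nat \<Rightarrow> nat \<Rightarrow> complex mat" where
  "Emat q r nu m = mat (nu * r) (q * m) (\<lambda>(i,t). if i div r < q \<and> i mod r < m \<and> t = (i div r) * m + i mod r then 1 else 0)"

lemma idx_lt: "(k::nat) < K \<Longrightarrow> b < m \<Longrightarrow> k * m + b < K * m"
proof -
  assume "k < K" "b < m"
  then have "k * m + b < Suc k * m" by simp
  also have "\<dots> \<le> K * m" using \<open>k < K\<close> by (intro mult_le_mono1) simp
  finally show ?thesis .
qed

lemma zero_app: "0\<^sub>v a @\<^sub>v 0\<^sub>v b = (0\<^sub>v (a + b) :: 'a::zero vec)"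
proof (rule eq_vecI)
  fix i assume "i < dim_vec (0\<^sub>v (a + b) :: 'a vec)"
  then show "(0\<^sub>v a @\<^sub>v 0\<^sub>v b) $ i = (0\<^sub>v (a + b) :: 'a vec) $ i" by (cases "i < a") auto
qed auto

lemma app_nil: "dim_vec w = 0 \<Longrightarrow> v @\<^sub>v w = v"
  by (rule eq_vecI) auto

context
  fixes q r mu nu :: nat and z :: complex
  assumes q: "0 < q" and r: "0 < r" and mu: "0 < mu" and nu: "q + r \<le> nu"
begin

abbreviation "KK \<equiv> Kprod q r (q + r - 1) z (mu - 1)"
abbreviation "cK1 \<equiv> q * (r - mu) + (r - 1) * r"
abbreviation "ss \<equiv> r * (nu - q - r + 1)"
abbreviation "Kbb \<equiv> Kbarbar q r mu nu z"

lemma KK_carrier: "KK \<in> carrier_mat (q * r + (r - 1) * r) cK1"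
proof -
  have nq: "q + r - 1 - q = r - 1" using r by simp
  have "Suc (mu - 1) = mu" using mu by simp
  then show ?thesis using Kprod_carrier[of q r "q + r - 1" z "mu - 1"] nq by simp
qed

lemma Kbb_def': "Kbb = four_block_mat KK (0\<^sub>m (q * r + (r - 1) * r) ss) (0\<^sub>m ss cK1) (1\<^sub>m ss)"
  unfolding Kbarbar_def Let_def using KK_carrier by simp

lemma Kbb_carrier: "Kbb \<in> carrier_mat (nu * r) (cK1 + ss)"
proof -
  have "Kbb \<in> carrier_mat (q * r + (r - 1) * r + ss) (cK1 + ss)"
    unfolding Kbb_def' by (rule four_block_carrier_mat[OF KK_carrier one_carrier_mat])
  then show ?thesis using arith1[OF r nu] by simp
qed

lemma Kbb_mult:
  assumes y: "y \<in> carrier_vec (cK1 + ss)"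
  shows "Kbb *\<^sub>v y = (KK *\<^sub>v vec_first y cK1) @\<^sub>v vec_last y ss"
proof -
  have y1: "vec_first y cK1 \<in> carrier_vec cK1" and y2: "vec_last y ss \<in> carrier_vec ss" by auto
  have "Kbb *\<^sub>v y = Kbb *\<^sub>v (vec_first y cK1 @\<^sub>v vec_last y ss)"
    using vec_first_last_append[OF y] by simp
  also have "\<dots> = (KK *\<^sub>v vec_first y cK1 + 0\<^sub>m (q * r + (r - 1) * r) ss *\<^sub>v vec_last y ss) @\<^sub>v
       (0\<^sub>m ss cK1 *\<^sub>v vec_first y cK1 + 1\<^sub>m ss *\<^sub>v vec_last y ss)"
    unfolding Kbb_def' by (rule four_block_mat_mult_vec[OF KK_carrier _ _ one_carrier_mat y1 y2]) auto
  also have "KK *\<^sub>v vec_first y cK1 + 0\<^sub>m (q * r + (r - 1) * r) ss *\<^sub>v vec_last y ss = KK *\<^sub>v vec_first y cK1"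
  proof -
    have "0\<^sub>m (q * r + (r - 1) * r) ss *\<^sub>v vec_last y ss = 0\<^sub>v (q * r + (r - 1) * r)" by (rule eq_vecI) auto
    moreover have "KK *\<^sub>v vec_first y cK1 \<in> carrier_vec (q * r + (r - 1) * r)" using KK_carrier y1 by simp
    ultimately show ?thesis by simp
  qed
  also have "0\<^sub>m ss cK1 *\<^sub>v vec_first y cK1 + 1\<^sub>m ss *\<^sub>v vec_last y ss = vec_last y ss"
  proof -
    have "0\<^sub>m ss cK1 *\<^sub>v vec_first y cK1 = 0\<^sub>v ss" by (rule eq_vecI) auto
    then show ?thesis using y2 by simp
  qed
  finally show ?thesis .
qed

lemma PsiN_Kbb:
  assumes y1: "y1 \<in> carrier_vec cK1" and y2: "y2 \<in> carrier_vec ss" and a: "a < q"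
  shows "PsiN z r nu ((KK *\<^sub>v y1) @\<^sub>v y2) a = Psi z q r 0 (KK *\<^sub>v y1) a"
proof -
  let ?x = "(KK *\<^sub>v y1) @\<^sub>v y2" and ?Q = "q + (r - 1)"
  have dK: "dim_vec (KK *\<^sub>v y1) = ?Q * r" using KK_carrier by (simp add: algebra_simps)
  have Qnu: "?Q \<le> nu" using nu by simp
  have "PsiN z r nu ?x a = (\<Sum>k\<in>{..<?Q} \<union> {?Q..<nu}. Polynomial.smult (1 / fact k) ((pderiv ^^ k) ([:0,1:] ^ a * vpoly (blk ?x (k * r) r))))"
    unfolding PsiN_def using Qnu by (intro sum.cong) auto
  also have "\<dots> = (\<Sum>k<?Q. Polynomial.smult (1 / fact k) ((pderiv ^^ k) ([:0,1:] ^ a * vpoly (blk ?x (k * r) r))))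
     + (\<Sum>k\<in>{?Q..<nu}. Polynomial.smult (1 / fact k) ((pderiv ^^ k) ([:0,1:] ^ a * vpoly (blk ?x (k * r) r))))"
    by (rule sum.union_disjoint) auto
  also have "(\<Sum>k\<in>{?Q..<nu}. Polynomial.smult (1 / fact k) ((pderiv ^^ k) ([:0,1:] ^ a * vpoly (blk ?x (k * r) r)))) = 0"
  proof (intro sum.neutral ballI)
    fix k assume "k \<in> {?Q..<nu}"
    then have k: "?Q \<le> k" by simp
    have "degree ([:0,1:] ^ a * vpoly (blk ?x (k * r) r)) \<le> degree ([:0,1:] ^ a :: complex poly) + degree (vpoly (blk ?x (k * r) r))"
      by (rule degree_mult_le)
    moreover have "degree ([:0,1:] ^ a :: complex poly) \<le> a" using degree_power_le[of "[:0,1:]::complex poly" a] by simp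
    moreover have "degree (vpoly (blk ?x (k * r) r)) < r" using degree_vpoly_less[of "blk ?x (k * r) r"] r by simp
    ultimately have "degree ([:0,1:] ^ a * vpoly (blk ?x (k * r) r)) < k" using k a by linarith
    then show "Polynomial.smult (1 / fact k) ((pderiv ^^ k) ([:0,1:] ^ a * vpoly (blk ?x (k * r) r))) = 0"
      by (simp add: hpderiv_deg_zero)
  qed
  also have "(\<Sum>k<?Q. Polynomial.smult (1 / fact k) ((pderiv ^^ k) ([:0,1:] ^ a * vpoly (blk ?x (k * r) r))))
      = Psi z q r 0 (KK *\<^sub>v y1) a"
    unfolding Psi_def
  proof (intro sum.cong refl)
    fix k assume "k \<in> {..<?Q}"
    then have k: "k < ?Q" by simp
    have kr: "k * r + r \<le> ?Q * r" using k by (metis add.commute mult_Suc mult_le_mono1 Suc_leI)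
    have b: "blk ?x (k * r) r = blk (KK *\<^sub>v y1) (k * r) r"
      by (rule blk_append_left) (use kr dK in simp)
    have u: "Uk z q r 0 (KK *\<^sub>v y1) k = vpoly (blk (KK *\<^sub>v y1) (k * r) r)"
    proof (cases "k < q")
      case True then show ?thesis by (simp add: Uk_def)
    next
      case False
      then have "q * r + (k - q) * r = k * r" by (simp add: add_mult_distrib[symmetric])
      then show ?thesis using False k by (simp add: Uk_def Hop_def)
    qed
    show "Polynomial.smult (1 / fact k) ((pderiv ^^ k) ([:0,1:] ^ a * vpoly (blk ?x (k * r) r))) =
      Polynomial.smult (1 / fact k) ((pderiv ^^ k) ([:0,1:] ^ a * Uk z q r 0 (KK *\<^sub>v y1) k))"
      by (simp only: b u)
  qed
  finally show ?thesis by simp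
qed

lemma NK0:
  assumes y: "y \<in> carrier_vec (cK1 + ss)"
  shows "Nmat q r mu nu z *\<^sub>v (Kbb *\<^sub>v y) = 0\<^sub>v (mu * q)"
proof -
  let ?y1 = "vec_first y cK1" and ?y2 = "vec_last y ss"
  have y1: "?y1 \<in> carrier_vec cK1" and y2: "?y2 \<in> carrier_vec ss" by auto
  have x: "Kbb *\<^sub>v y \<in> carrier_vec (nu * r)" using Kbb_carrier y by simp
  have y1': "?y1 \<in> carrier_vec (q * (r - Suc (mu - 1)) + (r - 1) * r)" using y1 mu by simp
  show ?thesis
  proof (rule iffD2[OF Nzero_iff[OF x q]], intro allI impI)
    fix a assume a: "a < q"
    have "PsiN z r nu (Kbb *\<^sub>v y) a = Psi z q r 0 (KK *\<^sub>v ?y1) a"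
      unfolding Kbb_mult[OF y] by (rule PsiN_Kbb[OF y1 y2 a])
    also have "\<dots> = [:-z,1:] ^ Suc (mu - 1) * Psi z q r (Suc (mu - 1)) ?y1 a"
      by (rule chain[OF q r a y1'])
    finally show "[:-z,1:] ^ mu dvd PsiN z r nu (Kbb *\<^sub>v y) a" using mu by simp
  qed
qed

lemma Kbb_inj:
  assumes y: "y \<in> carrier_vec (cK1 + ss)" and K0: "Kbb *\<^sub>v y = 0\<^sub>v (nu * r)"
  shows "y = 0\<^sub>v (cK1 + ss)"
proof -
  let ?y1 = "vec_first y cK1" and ?y2 = "vec_last y ss"
  have y1: "?y1 \<in> carrier_vec cK1" and y2: "?y2 \<in> carrier_vec ss" by auto
  have Ky: "KK *\<^sub>v ?y1 \<in> carrier_vec (q * r + (r - 1) * r)" using KK_carrier y1 by simp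
  have "(KK *\<^sub>v ?y1) @\<^sub>v ?y2 = 0\<^sub>v (q * r + (r - 1) * r + ss)"
    using K0 Kbb_mult[OF y] arith1[OF r nu] by simp
  from append_zero[OF Ky y2 this]
  have a1: "KK *\<^sub>v ?y1 = 0\<^sub>v (q * r + (r - 1) * r)" and a2: "?y2 = 0\<^sub>v ss" .
  have y1': "?y1 \<in> carrier_vec (q * (r - Suc (mu - 1)) + (r - 1) * r)" using y1 mu by simp
  have "?y1 = 0\<^sub>v (q * (r - Suc (mu - 1)) + (r - 1) * r)"
    by (rule Kprod_inj[OF q r y1' a1])
  then have "?y1 = 0\<^sub>v cK1" using mu by simp
  moreover have "0\<^sub>v cK1 @\<^sub>v 0\<^sub>v ss = (0\<^sub>v (cK1 + ss) :: complex vec)" by (rule zero_app)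
  ultimately show ?thesis using vec_first_last_append[OF y] a2 by metis
qed

abbreviation "mm \<equiv> min mu r"
abbreviation "EE \<equiv> Emat q r nu mm"

lemma EE_carrier: "EE \<in> carrier_mat (nu * r) (q * mm)"
  by (simp add: Emat_def)

lemma EE_mult:
  assumes u: "u \<in> carrier_vec (q * mm)" and i: "i < nu * r"
  shows "(EE *\<^sub>v u) $ i = (if i div r < q \<and> i mod r < mm then u $ ((i div r) * mm + i mod r) else 0)"
proof -
  have "(EE *\<^sub>v u) $ i = (\<Sum>t<q * mm. EE $$ (i, t) * u $ t)"
    using u i by (subst mv_entry) (auto simp: Emat_def)
  also have "\<dots> = (\<Sum>t<q * mm. if t = (i div r) * mm + i mod r then (if i div r < q \<and> i mod r < mm then u $ t else 0) else 0)"
    using i by (intro sum.cong) (auto simp: Emat_def)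
  also have "\<dots> = (if i div r < q \<and> i mod r < mm then u $ ((i div r) * mm + i mod r) else 0)"
    by (subst sum.delta) (auto intro: idx_lt)
  finally show ?thesis .
qed

lemma EE_inj:
  assumes u: "u \<in> carrier_vec (q * mm)" and E0: "EE *\<^sub>v u = 0\<^sub>v (nu * r)"
  shows "u = 0\<^sub>v (q * mm)"
proof (rule eq_vecI)
  fix t assume "t < dim_vec (0\<^sub>v (q * mm))"
  then have t: "t < q * mm" by simp
  have m0: "0 < mm" using t by (cases "mm = 0") auto
  define i where "i = (t div mm) * r + t mod mm"
  have tq: "t div mm < q" using t by (simp add: less_mult_imp_div_less)
  have tm: "t mod mm < mm" using m0 by (rule mod_less_divisor)
  have tr: "t mod mm < r" using tm by simp
  have i: "i < nu * r" unfolding i_def using tq nu tr by (intro idx_lt) auto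
  have di: "i div r = t div mm" "i mod r = t mod mm" using tr by (auto simp: i_def)
  have "(EE *\<^sub>v u) $ i = u $ t" using EE_mult[OF u i] di tq tm by (simp add: div_mult_mod_eq)
  then show "u $ t = 0\<^sub>v (q * mm) $ t" using E0 i t by simp
qed (use u in simp)

lemma EE_supp:
  assumes u: "u \<in> carrier_vec (q * mm)"
  shows "\<forall>i<nu * r. (q \<le> i div r \<or> mm \<le> i mod r) \<longrightarrow> (EE *\<^sub>v u) $ i = 0"
  using EE_mult[OF u] by auto

abbreviation "cc \<equiv> cK1 + ss"
abbreviation "MF \<equiv> four_block_mat Kbb EE (0\<^sub>m 0 cc) (0\<^sub>m 0 (q * mm))"

lemma dims: "cc + q * mm = nu * r"
  using arith2[OF r nu, of mu] by simp

lemma MF_carrier: "MF \<in> carrier_mat (nu * r) (nu * r)"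
proof -
  have "MF \<in> carrier_mat (nu * r + 0) (cc + q * mm)"
    by (rule four_block_carrier_mat[OF Kbb_carrier zero_carrier_mat])
  then show ?thesis using dims by simp
qed

lemma MF_mult:
  assumes w: "w \<in> carrier_vec (cc + q * mm)"
  shows "MF *\<^sub>v w = Kbb *\<^sub>v vec_first w cc + EE *\<^sub>v vec_last w (q * mm)"
proof -
  have w1: "vec_first w cc \<in> carrier_vec cc" and w2: "vec_last w (q * mm) \<in> carrier_vec (q * mm)" by auto
  have "MF *\<^sub>v w = MF *\<^sub>v (vec_first w cc @\<^sub>v vec_last w (q * mm))"
    using vec_first_last_append[OF w] by simp
  also have "\<dots> = (Kbb *\<^sub>v vec_first w cc + EE *\<^sub>v vec_last w (q * mm)) @\<^sub>v
      (0\<^sub>m 0 cc *\<^sub>v vec_first w cc + 0\<^sub>m 0 (q * mm) *\<^sub>v vec_last w (q * mm))"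
    by (rule four_block_mat_mult_vec[OF Kbb_carrier EE_carrier _ _ w1 w2]) auto
  also have "\<dots> = Kbb *\<^sub>v vec_first w cc + EE *\<^sub>v vec_last w (q * mm)"
    by (rule app_nil) simp
  finally show ?thesis .
qed

lemma N_neg: "v \<in> carrier_vec (nu * r) \<Longrightarrow> Nmat q r mu nu z *\<^sub>v (- v) = - (Nmat q r mu nu z *\<^sub>v v)"
  using Nmat_carrier[of q r mu nu z] by (intro eq_vecI) (auto simp: scalar_prod_uminus_right)

lemma EE_zero_if_ker:
  assumes u: "u \<in> carrier_vec (q * mm)" and N0: "Nmat q r mu nu z *\<^sub>v (EE *\<^sub>v u) = 0\<^sub>v (mu * q)"
  shows "EE *\<^sub>v u = 0\<^sub>v (nu * r)"
proof (rule supp_inj[OF _ _ q mu r _ _ _ EE_supp[OF u] N0])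
  show "EE *\<^sub>v u \<in> carrier_vec (nu * r)" using EE_carrier u by simp
qed (use nu mu r in auto)

lemma MF_inj:
  assumes w: "w \<in> carrier_vec (nu * r)" and M0: "MF *\<^sub>v w = 0\<^sub>v (nu * r)"
  shows "w = 0\<^sub>v (nu * r)"
proof -
  have w': "w \<in> carrier_vec (cc + q * mm)" using w dims by simp
  let ?w1 = "vec_first w cc" and ?w2 = "vec_last w (q * mm)"
  have w1: "?w1 \<in> carrier_vec cc" and w2: "?w2 \<in> carrier_vec (q * mm)" by auto
  have k1: "Kbb *\<^sub>v ?w1 \<in> carrier_vec (nu * r)" using Kbb_carrier w1 by simp
  have e1: "EE *\<^sub>v ?w2 \<in> carrier_vec (nu * r)" using EE_carrier w2 by simp
  have sum0: "Kbb *\<^sub>v ?w1 + EE *\<^sub>v ?w2 = 0\<^sub>v (nu * r)" using M0 MF_mult[OF w'] by simp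
  have ee: "EE *\<^sub>v ?w2 = - (Kbb *\<^sub>v ?w1)"
  proof (rule eq_vecI)
    fix i assume "i < dim_vec (- (Kbb *\<^sub>v ?w1))"
    then have i: "i < nu * r" using k1 carrier_matD(1)[OF Kbb_carrier] by simp
    have "(Kbb *\<^sub>v ?w1 + EE *\<^sub>v ?w2) $ i = 0" using sum0 i by simp
    then show "(EE *\<^sub>v ?w2) $ i = (- (Kbb *\<^sub>v ?w1)) $ i" using i carrier_vecD[OF k1] carrier_vecD[OF e1] by (simp add: add_eq_0_iff2)
  qed (use carrier_vecD[OF k1] carrier_vecD[OF e1] in simp)
  have "Nmat q r mu nu z *\<^sub>v (EE *\<^sub>v ?w2) = 0\<^sub>v (mu * q)"
    unfolding ee N_neg[OF k1] NK0[OF w1] by simp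
  then have E0: "EE *\<^sub>v ?w2 = 0\<^sub>v (nu * r)" by (rule EE_zero_if_ker[OF w2])
  then have a2: "?w2 = 0\<^sub>v (q * mm)" by (rule EE_inj[OF w2])
  have "Kbb *\<^sub>v ?w1 = 0\<^sub>v (nu * r)" using sum0 E0 k1 by simp
  then have a1: "?w1 = 0\<^sub>v cc" by (rule Kbb_inj[OF w1])
  have "0\<^sub>v cc @\<^sub>v 0\<^sub>v (q * mm) = (0\<^sub>v (cc + q * mm) :: complex vec)" by (rule zero_app)
  then show ?thesis using vec_first_last_append[OF w'] a1 a2 dims by metis
qed

lemma MF_surj:
  assumes x: "x \<in> carrier_vec (nu * r)"
  shows "\<exists>w \<in> carrier_vec (nu * r). MF *\<^sub>v w = x"
proof -
  have "det MF \<noteq> 0"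
  proof
    assume "det MF = 0"
    then obtain v where v: "v \<in> carrier_vec (nu * r)" "v \<noteq> 0\<^sub>v (nu * r)" "MF *\<^sub>v v = 0\<^sub>v (nu * r)"
      using det_0_iff_vec_prod_zero[OF MF_carrier] by blast
    then show False using MF_inj by blast
  qed
  from det_non_zero_imp_unit[OF MF_carrier this, unfolded Units_def, of "()"]
  obtain B where B: "B \<in> carrier_mat (nu * r) (nu * r)" and MB: "MF * B = 1\<^sub>m (nu * r)"
    by (auto simp: ring_mat_def)
  have "MF *\<^sub>v (B *\<^sub>v x) = (MF * B) *\<^sub>v x"
    using assoc_mult_mat_vec[OF MF_carrier B x] by simp
  also have "\<dots> = x" using MB x by simp
  finally show ?thesis using B x by (intro bexI[of _ "B *\<^sub>v x"]) auto
qed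

lemma ker_sub:
  assumes x: "x \<in> carrier_vec (nu * r)" and N0: "Nmat q r mu nu z *\<^sub>v x = 0\<^sub>v (mu * q)"
  shows "\<exists>y \<in> carrier_vec cc. Kbb *\<^sub>v y = x"
proof -
  obtain w where w: "w \<in> carrier_vec (nu * r)" and Mw: "MF *\<^sub>v w = x" using MF_surj[OF x] by blast
  have w': "w \<in> carrier_vec (cc + q * mm)" using w dims by simp
  let ?w1 = "vec_first w cc" and ?w2 = "vec_last w (q * mm)"
  have w1: "?w1 \<in> carrier_vec cc" and w2: "?w2 \<in> carrier_vec (q * mm)" by auto
  have k1: "Kbb *\<^sub>v ?w1 \<in> carrier_vec (nu * r)" using Kbb_carrier w1 by simp
  have e1: "EE *\<^sub>v ?w2 \<in> carrier_vec (nu * r)" using EE_carrier w2 by simp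
  have xs: "x = Kbb *\<^sub>v ?w1 + EE *\<^sub>v ?w2" using Mw MF_mult[OF w'] by simp
  have "Nmat q r mu nu z *\<^sub>v x = Nmat q r mu nu z *\<^sub>v (Kbb *\<^sub>v ?w1) + Nmat q r mu nu z *\<^sub>v (EE *\<^sub>v ?w2)"
    unfolding xs by (rule mult_add_distrib_mat_vec[OF Nmat_carrier k1 e1])
  moreover have "Nmat q r mu nu z *\<^sub>v (EE *\<^sub>v ?w2) \<in> carrier_vec (mu * q)"
    by (rule mult_mat_vec_carrier[OF Nmat_carrier e1])
  ultimately have "Nmat q r mu nu z *\<^sub>v (EE *\<^sub>v ?w2) = Nmat q r mu nu z *\<^sub>v x"
    unfolding NK0[OF w1] by simp
  then have "Nmat q r mu nu z *\<^sub>v (EE *\<^sub>v ?w2) = 0\<^sub>v (mu * q)" using N0 by simp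
  then have "EE *\<^sub>v ?w2 = 0\<^sub>v (nu * r)" by (rule EE_zero_if_ker[OF w2])
  then have "x = Kbb *\<^sub>v ?w1" using xs k1 by simp
  then show ?thesis using w1 by blast
qed

lemma main_ker: "mat_kernel (Nmat q r mu nu z) = vec_space.col_space (nu * r) Kbb"
proof -
  have cs: "vec_space.col_space (nu * r) Kbb = {y \<in> carrier_vec (nu * r). \<exists>x \<in> carrier_vec cc. Kbb *\<^sub>v x = y}"
    using vec_space.col_space_eq[OF Kbb_carrier] Kbb_carrier by simp
  have dN: "dim_row (Nmat q r mu nu z) = mu * q" "dim_col (Nmat q r mu nu z) = nu * r"
    using Nmat_carrier[of q r mu nu z] by auto
  show ?thesis
  proof (rule Set.set_eqI)
    fix x
    show "x \<in> mat_kernel (Nmat q r mu nu z) \<longleftrightarrow> x \<in> vec_space.col_space (nu * r) Kbb"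
    proof
      assume "x \<in> mat_kernel (Nmat q r mu nu z)"
      then have x: "x \<in> carrier_vec (nu * r)" and N0: "Nmat q r mu nu z *\<^sub>v x = 0\<^sub>v (mu * q)"
        unfolding mat_kernel_def dN by auto
      show "x \<in> vec_space.col_space (nu * r) Kbb"
        unfolding cs using ker_sub[OF x N0] x by blast
    next
      assume "x \<in> vec_space.col_space (nu * r) Kbb"
      then obtain y where y: "y \<in> carrier_vec cc" and x: "x = Kbb *\<^sub>v y" unfolding cs by blast
      show "x \<in> mat_kernel (Nmat q r mu nu z)"
        unfolding mat_kernel_def dN x using NK0[OF y] Kbb_carrier y by auto
    qed
  qed
qed

lemma unit_col: assumes A: "(A :: complex mat) \<in> carrier_mat n nc" and i: "i < nc" shows "A *\<^sub>v unit_vec nc i = col A i"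
proof -
  have d: "dim_row A = n" "dim_col A = nc" using A by auto
  show ?thesis by (rule eq_vecI) (use i in \<open>auto simp: d\<close>)
qed

lemma Kbb_distinct: "distinct (cols Kbb)"
proof -
  have "inj_on (col Kbb) {0..<cc}"
  proof (rule inj_onI)
    fix i j assume i: "i \<in> {0..<cc}" and j: "j \<in> {0..<cc}" and e: "col Kbb i = col Kbb j"
    show "i = j"
    proof (rule ccontr)
      assume ne: "i \<noteq> j"
      let ?v = "unit_vec cc i - unit_vec cc j :: complex vec"
      have vc: "?v \<in> carrier_vec cc" by simp
      have "Kbb *\<^sub>v ?v = Kbb *\<^sub>v unit_vec cc i - Kbb *\<^sub>v unit_vec cc j"
        by (rule mult_minus_distrib_mat_vec[OF Kbb_carrier]) auto
      also have "\<dots> = col Kbb i - col Kbb j" using i j unit_col[OF Kbb_carrier] by simp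
      also have "\<dots> = 0\<^sub>v (nu * r)" using e Kbb_carrier j by (auto intro!: eq_vecI)
      finally have "?v = 0\<^sub>v cc" by (rule Kbb_inj[OF vc])
      then have "?v $ i = 0" using i by simp
      then show False using i j ne by simp
    qed
  qed
  then show ?thesis using Kbb_carrier unfolding cols_def by (simp add: distinct_map)
qed

lemma Kbb_indpt: "module.lin_indpt class_ring (module_vec TYPE(complex) (nu * r)) (set (cols Kbb))"
proof
  assume "module.lin_dep class_ring (module_vec TYPE(complex) (nu * r)) (set (cols Kbb))"
  then obtain v where v: "v \<in> carrier_vec cc" "v \<noteq> 0\<^sub>v cc" "Kbb *\<^sub>v v = 0\<^sub>v (nu * r)"
    using vec_space.lin_depE[OF Kbb_carrier _ Kbb_distinct] by blast
  then show False using Kbb_inj by blast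
qed

lemma main_dim: "kernel_dim (Nmat q r mu nu z) = cc"
proof -
  have "kernel_dim (Nmat q r mu nu z) = vec_space.rank (nu * r) Kbb"
    unfolding kernel_dim_def vec_space.rank_def vec_space.col_space_def[symmetric] main_ker[symmetric]
    using Nmat_carrier[of q r mu nu z] by simp
  also have "\<dots> = cc"
    by (rule vec_space.lin_indpt_full_rank[OF Kbb_carrier Kbb_distinct Kbb_indpt])
  finally show ?thesis .
qed

end

theorem theorem5p9:
  fixes q r mu nu :: nat and z :: complex
  assumes "q > 0" and "r > 0" and "mu > 0" and "nu \<ge> q + r"
  shows "mat_kernel (Nmat q r mu nu z) = vec_space.col_space (nu * r) (Kbarbar q r mu nu z)
    \<and> kernel_dim (Nmat q r mu nu z) = (if mu < r then nu * r - mu * q else (nu - q) * r)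
    \<and> kernel_dim (Nmat q r mu nu z) = nu * r - q * min mu r"
proof -
  have q: "0 < q" and r: "0 < r" and mu: "0 < mu" and nu: "q + r \<le> nu" using assms by auto
  have K: "mat_kernel (Nmat q r mu nu z) = vec_space.col_space (nu * r) (Kbarbar q r mu nu z)"
    by (rule main_ker[OF q r mu nu])
  have D: "kernel_dim (Nmat q r mu nu z) = q * (r - mu) + (r - 1) * r + r * (nu - q - r + 1)"
    by (rule main_dim[OF q r mu nu])
  have A: "q * (r - mu) + (r - 1) * r + r * (nu - q - r + 1) + q * min mu r = nu * r"
    by (rule arith2[OF r nu])
  have D2: "kernel_dim (Nmat q r mu nu z) = nu * r - q * min mu r" using D A by linarith
  show ?thesis using K D2 arith3[OF r nu, of mu] by simp
qed

end
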